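(* Consider the optimal stopping problem \[ G(p):=\sup_{\tau_O}\mathbb{E}^p\left[\int_0^{\tau_O}e^{-rt}(P(t)-C)\,\mathrm{d}t-e^{-r\tau_O}(l_1P(\tau_O)+l_0)\right],\qquad p>0. \] (i) If $r>\mu$ and $C\le rK_O$, then $\tau_O^*:=+\infty$ a.s. is a maximizer, and $G(p)=\frac{p}{r-\mu}-\frac{C}{r}$. (ii) If $r>\mu$ and $C>rK_O$, then $\tau_O^*:=\inf\{t>0: P(t)\le p_O\}$ is a maximizer, where \[ p_O=e^{-\mu\delta}\frac{\lambda_1}{\lambda_1-1}(r-\mu)\left(\frac{C}{r}-K_O\right), \] and \[ G(p)=\begin{cases} Ap^{\lambda_1}+\dfrac{p}{r-\mu}-\dfrac{C}{r}, & p>p_O,\\[2mm] \dfrac{p}{\mu-r}\left(e^{(\mu-r)\delta}-1\right)+\dfrac{C}{r}\left(e^{-r\delta}-1\right)-e^{-r\delta}K_O, & p\le p_O,\end{cases} \] where $A=e^{(\mu-r)\delta}\,p_O^{1-\lambda_1}/(\lambda_1(\mu-r))$.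
   Context: Let $B$ be a one-dimensional standard Brownian motion on a filtered probability space satisfying the usual conditions (with trivial completed $\mathscr{F}_0$). For constants $\mu\in\mathbb{R}$, $\sigma>0$, $p>0$, the price $P$ solves $\mathrm{d}P(t)=\mu P(t)\,\mathrm{d}t+\sigma P(t)\,\mathrm{d}B(t)$, $P(0)=p$; $\mathbb{E}^p$ is expectation given $P(0)=p$. The supremum is over stopping times valued in $[0,+\infty]$, with $e^{-r\tau}(\cdots)=0$ on $\{\tau=+\infty\}$. Constants: $r>0$, $C,K_I,K_O\in\mathbb{R}$, $\delta\ge0$. With $r>\mu$: $l_1:=-\frac{e^{(\mu-r)\delta}-1}{\mu-r}$, $l_0:=-\frac{C}{r}(e^{-r\delta}-1)+e^{-r\delta}K_O$. $\lambda_1<\lambda_2$ are the two roots of $r-\mu\lambda-\frac12\sigma^2\lambda(\lambda-1)=0$ (when $r>\mu$, $\lambda_1<0$ and $\lambda_2>1$). *)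

theory Defs
  imports "HOL-Probability.Probability"
begin

definition usual_filtration :: "'a measure \<Rightarrow> (real \<Rightarrow> 'a measure) \<Rightarrow> bool" where
  "usual_filtration M F \<longleftrightarrow>
     (\<forall>t. space (F t) = space M \<and> sets (F t) \<subseteq> sets M) \<and>
     (\<forall>s t. 0 \<le> s \<longrightarrow> s \<le> t \<longrightarrow> sets (F s) \<subseteq> sets (F t)) \<and>
     (\<forall>t\<ge>0. \<forall>A. (\<forall>u>t. A \<in> sets (F u)) \<longrightarrow> A \<in> sets (F t)) \<and>
     complete_measure M \<and>
     null_sets M \<subseteq> sets (F 0)"

definition trivial_F0 :: "'a measure \<Rightarrow> (real \<Rightarrow> 'a measure) \<Rightarrow> bool" where
  "trivial_F0 M F \<longleftrightarrow> (\<forall>A \<in> sets (F 0). measure M A = 0 \<or> measure M A = 1)"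

definition std_brownian_motion ::
    "'a measure \<Rightarrow> (real \<Rightarrow> 'a measure) \<Rightarrow> (real \<Rightarrow> 'a \<Rightarrow> real) \<Rightarrow> bool" where
  "std_brownian_motion M F B \<longleftrightarrow>
     (\<forall>t\<ge>0. B t \<in> borel_measurable (F t)) \<and>
     (\<forall>\<omega>\<in>space M. B 0 \<omega> = 0 \<and> continuous_on {0..} (\<lambda>t. B t \<omega>)) \<and>
     (\<forall>s t. 0 \<le> s \<longrightarrow> s < t \<longrightarrow>
        distributed M lborel (\<lambda>\<omega>. B t \<omega> - B s \<omega>) (normal_density 0 (sqrt (t - s))) \<and>
        (\<forall>A \<in> sets (F s). \<forall>U \<in> sets borel.
           measure M (A \<inter> {\<omega> \<in> space M. B t \<omega> - B s \<omega> \<in> U}) =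
           measure M A * measure M {\<omega> \<in> space M. B t \<omega> - B s \<omega> \<in> U}))"

definition is_stopping_time :: "(real \<Rightarrow> 'a measure) \<Rightarrow> ('a \<Rightarrow> ereal) \<Rightarrow> bool" where
  "is_stopping_time F \<tau> \<longleftrightarrow>
     (\<forall>\<omega>. 0 \<le> \<tau> \<omega>) \<and> (\<forall>t\<ge>0. {\<omega> \<in> space (F t). \<tau> \<omega> \<le> ereal t} \<in> sets (F t))"

text \<open>Geometric Brownian motion: the (unique strong) solution of
  dP = mu P dt + sigma P dB, P(0) = p.\<close>
definition gbm :: "real \<Rightarrow> real \<Rightarrow> real \<Rightarrow> (real \<Rightarrow> 'a \<Rightarrow> real) \<Rightarrow> real \<Rightarrow> 'a \<Rightarrow> real" where
  "gbm p \<mu> \<sigma> B t \<omega> = p * exp ((\<mu> - \<sigma>\<^sup>2 / 2) * t + \<sigma> * B t \<omega>)"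

definition stop_reward ::
    "'a measure \<Rightarrow> real \<Rightarrow> real \<Rightarrow> real \<Rightarrow> real \<Rightarrow> (real \<Rightarrow> 'a \<Rightarrow> real) \<Rightarrow> ('a \<Rightarrow> ereal) \<Rightarrow> real" where
  "stop_reward M r C l1 l0 P \<tau> =
     (\<integral>\<omega>. (LINT t:{t. 0 \<le> t \<and> ereal t < \<tau> \<omega>}|lborel. exp (- r * t) * (P t \<omega> - C))
          - (if \<tau> \<omega> = \<infinity> then 0
             else exp (- r * real_of_ereal (\<tau> \<omega>)) * (l1 * P (real_of_ereal (\<tau> \<omega>)) \<omega> + l0)) \<partial>M)"

definition value_G ::
    "'a measure \<Rightarrow> (real \<Rightarrow> 'a measure) \<Rightarrow> real \<Rightarrow> real \<Rightarrow> real \<Rightarrow> real \<Rightarrow> (real \<Rightarrow> 'a \<Rightarrow> real) \<Rightarrow> real" where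
  "value_G M F r C l1 l0 P = (SUP \<tau> \<in> {\<tau>. is_stopping_time F \<tau>}. stop_reward M r C l1 l0 P \<tau>)"

end

theory Submission
  imports Defs
begin

locale bmctx = prob_space M for M :: "'a measure" +
  fixes F :: "real \<Rightarrow> 'a measure" and B :: "real \<Rightarrow> 'a \<Rightarrow> real"
  assumes filt: "usual_filtration M F" and bm: "std_brownian_motion M F B"
begin

lemma space_F: "space (F t) = space M"
  using filt unfolding usual_filtration_def by auto

lemma sets_F: "sets (F t) \<subseteq> sets M"
  using filt unfolding usual_filtration_def by auto

lemma subalg: "subalgebra M (F t)"
  using space_F sets_F unfolding subalgebra_def by auto

lemma F_mono: "0 \<le> s \<Longrightarrow> s \<le> t \<Longrightarrow> sets (F s) \<subseteq> sets (F t)"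
  using filt unfolding usual_filtration_def by auto

lemma F_rc: "0 \<le> t \<Longrightarrow> (\<And>u. u > t \<Longrightarrow> A \<in> sets (F u)) \<Longrightarrow> A \<in> sets (F t)"
  using filt unfolding usual_filtration_def by auto

lemma B_F: "0 \<le> t \<Longrightarrow> B t \<in> borel_measurable (F t)"
  using bm unfolding std_brownian_motion_def by auto

lemma B_meas[measurable]: "0 \<le> t \<Longrightarrow> B t \<in> borel_measurable M"
  using B_F measurable_from_subalg[OF subalg] by blast

lemma B0: "\<omega> \<in> space M \<Longrightarrow> B 0 \<omega> = 0"
  using bm unfolding std_brownian_motion_def by auto

lemma Bcont: "\<omega> \<in> space M \<Longrightarrow> continuous_on {0..} (\<lambda>t. B t \<omega>)"
  using bm unfolding std_brownian_motion_def by auto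

lemma incr_distr: "0 \<le> s \<Longrightarrow> s < t \<Longrightarrow>
   distributed M lborel (\<lambda>\<omega>. B t \<omega> - B s \<omega>) (normal_density 0 (sqrt (t - s)))"
  using bm unfolding std_brownian_motion_def by auto

lemma incr_indep: "0 \<le> s \<Longrightarrow> s < t \<Longrightarrow> A \<in> sets (F s) \<Longrightarrow> U \<in> sets borel \<Longrightarrow>
   measure M (A \<inter> {\<omega> \<in> space M. B t \<omega> - B s \<omega> \<in> U}) =
           measure M A * measure M {\<omega> \<in> space M. B t \<omega> - B s \<omega> \<in> U}"
  using bm unfolding std_brownian_motion_def by auto

lemma normal_mgf_aux: 
  assumes "s > 0"
  shows "normal_density 0 s x * exp (a * x) = exp (a^2 * s^2 / 2) * normal_density (a * s^2) s x"
proof -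
  have "- (x^2) / (2 * s^2) + a * x = - ((x - a * s^2)^2) / (2 * s^2) + a^2 * s^2 / 2"
    using assms by (simp add: field_simps power2_eq_square)
  then show ?thesis
    unfolding normal_density_def by (simp add: exp_add[symmetric] mult_ac)
qed

lemma mgf_incr:
  assumes "0 \<le> s" "s < t"
  shows "(\<integral>\<^sup>+\<omega>. ennreal (exp (a * (B t \<omega> - B s \<omega>))) \<partial>M) = ennreal (exp (a^2 * (t - s) / 2))"
proof -
  let ?sd = "sqrt (t - s)"
  have sd: "?sd > 0" using assms by simp
  have "(\<integral>\<^sup>+\<omega>. ennreal (exp (a * (B t \<omega> - B s \<omega>))) \<partial>M) =
     (\<integral>\<^sup>+x. ennreal (normal_density 0 ?sd x) * ennreal (exp (a * x)) \<partial>lborel)"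
    by (rule distributed_nn_integral[OF incr_distr[OF assms], symmetric]) simp
  also have "\<dots> = (\<integral>\<^sup>+x. ennreal (exp (a^2 * ?sd^2 / 2)) * ennreal (normal_density (a * ?sd^2) ?sd x) \<partial>lborel)"
    by (intro nn_integral_cong) (simp add: normal_mgf_aux[OF sd] ennreal_mult[symmetric])
  also have "\<dots> = ennreal (exp (a^2 * ?sd^2 / 2)) * (\<integral>\<^sup>+x. ennreal (normal_density (a * ?sd^2) ?sd x) \<partial>lborel)"
    by (simp add: nn_integral_cmult)
  also have "(\<integral>\<^sup>+x. ennreal (normal_density (a * ?sd^2) ?sd x) \<partial>lborel) = 1"
    using sd by (subst nn_integral_eq_integral) (auto simp del: real_sqrt_gt_0_iff)
  finally show ?thesis using assms by simp
qed

end

context bmctx begin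

lemma sigma_vimage_borel:
  assumes "f \<in> borel_measurable M"
  shows "sigma_sets (space M) {f -` A \<inter> space M |A. A \<in> sets (borel::real measure)}
       = {f -` A \<inter> space M |A. A \<in> sets (borel::real measure)}"
proof -
  have "sigma_sets (UNIV::real set) (sets borel) = sets borel"
    using sets.sigma_sets_eq[of "borel::real measure"] by simp
  moreover have "{f -` A \<inter> space M |A. A \<in> sigma_sets UNIV (sets (borel::real measure))}
       = sigma_sets (space M) {f -` A \<inter> space M |A. A \<in> sets (borel::real measure)}"
    by (rule sigma_sets_vimage_commute) simp
  ultimately show ?thesis by simp
qed

lemma indep_incr_var:
  assumes s: "0 \<le> s" "s < t" and X: "X \<in> borel_measurable (F s)"
  shows "indep_var borel X borel (\<lambda>\<omega>. B t \<omega> - B s \<omega>)"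
proof -
  let ?D = "\<lambda>\<omega>. B t \<omega> - B s \<omega>"
  have XM: "X \<in> borel_measurable M" using X measurable_from_subalg[OF subalg] by blast
  have DM: "?D \<in> borel_measurable M" using s by (intro borel_measurable_diff B_meas) auto
  have XS: "{X -` A \<inter> space M |A. A \<in> sets borel} \<subseteq> sets (F s)"
  proof
    fix E assume "E \<in> {X -` A \<inter> space M |A. A \<in> sets borel}"
    then obtain A where "A \<in> sets borel" "E = X -` A \<inter> space M" by auto
    then show "E \<in> sets (F s)" using measurable_sets[OF X, of A] space_F by simp
  qed
  show ?thesis
    unfolding indep_var_eq indep_sets2_eq sigma_vimage_borel[OF XM] sigma_vimage_borel[OF DM]
  proof (intro conjI ballI)
    show "random_variable borel X" using XM by simp
    show "random_variable borel ?D" using DM by simp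
    show "{X -` A \<inter> space M |A. A \<in> sets borel} \<subseteq> events" using XS sets_F by blast
    show "{?D -` A \<inter> space M |A. A \<in> sets borel} \<subseteq> events" using DM by auto
    fix a b assume a: "a \<in> {X -` A \<inter> space M |A. A \<in> sets borel}"
      and b: "b \<in> {?D -` A \<inter> space M |A. A \<in> sets borel}"
    then obtain U where U: "U \<in> sets borel" "b = ?D -` U \<inter> space M" by auto
    have "b = {\<omega> \<in> space M. B t \<omega> - B s \<omega> \<in> U}" using U by auto
    then show "prob (a \<inter> b) = prob a * prob b"
      using incr_indep[OF s, of a U] a XS U(1) by auto
  qed
qed

lemma indep_incr_nn:
  assumes s: "0 \<le> s" "s < t" and X: "X \<in> borel_measurable (F s)" and Xnn: "\<And>\<omega>. 0 \<le> X \<omega>"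
    and g: "g \<in> borel_measurable borel" and gnn: "\<And>x. 0 \<le> g x"
  shows "(\<integral>\<^sup>+\<omega>. ennreal (X \<omega> * g (B t \<omega> - B s \<omega>)) \<partial>M)
       = (\<integral>\<^sup>+\<omega>. ennreal (X \<omega>) \<partial>M) * (\<integral>\<^sup>+\<omega>. ennreal (g (B t \<omega> - B s \<omega>)) \<partial>M)"
proof -
  let ?D = "\<lambda>\<omega>. B t \<omega> - B s \<omega>"
  have "indep_var borel (ennreal \<circ> X) borel ((\<lambda>x. ennreal (g x)) \<circ> ?D)"
    by (rule indep_var_compose[OF indep_incr_var[OF s X]]) (use g in auto)
  then have ind: "indep_var borel (\<lambda>\<omega>. ennreal (X \<omega>)) borel (\<lambda>\<omega>. ennreal (g (?D \<omega>)))" by (simp add: comp_def)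
  have "indep_vars (\<lambda>_. borel) (case_bool (\<lambda>\<omega>. ennreal (X \<omega>)) (\<lambda>\<omega>. ennreal (g (?D \<omega>)))) UNIV"
  proof -
    have **: "(\<lambda> _. borel) = case_bool borel borel"
      by (rule ext) (simp split: bool.split)
    show ?thesis using ind unfolding indep_var_def ** .
  qed
  from indep_vars_nn_integral[OF _ this]
  have "(\<integral>\<^sup>+\<omega>. (\<Prod>i\<in>UNIV. case_bool (\<lambda>\<omega>. ennreal (X \<omega>)) (\<lambda>\<omega>. ennreal (g (?D \<omega>))) i \<omega>) \<partial>M) =
        (\<Prod>i\<in>UNIV. \<integral>\<^sup>+\<omega>. case_bool (\<lambda>\<omega>. ennreal (X \<omega>)) (\<lambda>\<omega>. ennreal (g (?D \<omega>))) i \<omega> \<partial>M)"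
    by (auto split: bool.split)
  then show ?thesis using Xnn gnn by (simp add: UNIV_bool mult.commute ennreal_mult)
qed

end

lemma discrete_OS:
  fixes Y :: "nat \<Rightarrow> 'a \<Rightarrow> real" and \<sigma> :: "'a \<Rightarrow> nat"
  assumes Ym[measurable]: "\<And>k. Y k \<in> borel_measurable M" and Ynn: "\<And>k \<omega>. 0 \<le> Y k \<omega>"
    and \<sigma>m[measurable]: "\<sigma> \<in> measurable M (count_space UNIV)"
    and step: "\<And>k. (\<integral>\<^sup>+\<omega>. ennreal (indicator {\<omega>\<in>space M. k < \<sigma> \<omega>} \<omega> * Y (Suc k) \<omega>) \<partial>M)
                 = (\<integral>\<^sup>+\<omega>. ennreal (indicator {\<omega>\<in>space M. k < \<sigma> \<omega>} \<omega> * Y k \<omega>) \<partial>M)"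
  shows "(\<integral>\<^sup>+\<omega>. ennreal (Y (min (\<sigma> \<omega>) j) \<omega>) \<partial>M) = (\<integral>\<^sup>+\<omega>. ennreal (Y 0 \<omega>) \<partial>M)"
proof (induction j)
  case 0 then show ?case by simp
next
  case (Suc j)
  have m1: "(\<lambda>\<omega>. Y (min (\<sigma> \<omega>) j) \<omega>) \<in> borel_measurable M"
    by (rule measurable_compose_countable[where f="\<lambda>i \<omega>. Y (min i j) \<omega>"]) auto
  have m2: "(\<lambda>\<omega>. Y (min (\<sigma> \<omega>) (Suc j)) \<omega>) \<in> borel_measurable M"
    by (rule measurable_compose_countable[where f="\<lambda>i \<omega>. Y (min i (Suc j)) \<omega>"]) auto
  have S: "{\<omega>\<in>space M. j < \<sigma> \<omega>} \<in> sets M" by measurable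
  have e1: "\<And>\<omega>. \<omega> \<in> space M \<Longrightarrow> ennreal (Y (min (\<sigma> \<omega>) (Suc j)) \<omega>) =
      ennreal (indicator {\<omega>\<in>space M. \<not> j < \<sigma> \<omega>} \<omega> * Y (min (\<sigma> \<omega>) j) \<omega>)
      + ennreal (indicator {\<omega>\<in>space M. j < \<sigma> \<omega>} \<omega> * Y (Suc j) \<omega>)"
    by (case_tac "\<sigma> \<omega> \<le> j"; case_tac "\<sigma> \<omega> = Suc j") (auto simp: indicator_def min_def)
  have e2: "\<And>\<omega>. \<omega> \<in> space M \<Longrightarrow> ennreal (Y (min (\<sigma> \<omega>) j) \<omega>) =
      ennreal (indicator {\<omega>\<in>space M. \<not> j < \<sigma> \<omega>} \<omega> * Y (min (\<sigma> \<omega>) j) \<omega>)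
      + ennreal (indicator {\<omega>\<in>space M. j < \<sigma> \<omega>} \<omega> * Y j \<omega>)"
    by (auto simp: indicator_def min_def)
  have "(\<integral>\<^sup>+\<omega>. ennreal (Y (min (\<sigma> \<omega>) (Suc j)) \<omega>) \<partial>M) =
     (\<integral>\<^sup>+\<omega>. ennreal (indicator {\<omega>\<in>space M. \<not> j < \<sigma> \<omega>} \<omega> * Y (min (\<sigma> \<omega>) j) \<omega>) \<partial>M)
      + (\<integral>\<^sup>+\<omega>. ennreal (indicator {\<omega>\<in>space M. j < \<sigma> \<omega>} \<omega> * Y (Suc j) \<omega>) \<partial>M)"
    using m1 by (subst nn_integral_cong[OF e1], simp, subst nn_integral_add) auto
  also have "\<dots> = (\<integral>\<^sup>+\<omega>. ennreal (indicator {\<omega>\<in>space M. \<not> j < \<sigma> \<omega>} \<omega> * Y (min (\<sigma> \<omega>) j) \<omega>) \<partial>M)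
      + (\<integral>\<^sup>+\<omega>. ennreal (indicator {\<omega>\<in>space M. j < \<sigma> \<omega>} \<omega> * Y j \<omega>) \<partial>M)"
    by (simp add: step)
  also have "\<dots> = (\<integral>\<^sup>+\<omega>. ennreal (Y (min (\<sigma> \<omega>) j) \<omega>) \<partial>M)"
    using m1 by (subst nn_integral_cong[OF e2], simp, subst nn_integral_add) auto
  finally show ?case using Suc by simp
qed

context bmctx begin

definition EM :: "real \<Rightarrow> real \<Rightarrow> 'a \<Rightarrow> real" where
  "EM a t \<omega> = exp (a * B t \<omega> - a^2 * t / 2)"

lemma EM_pos: "EM a t \<omega> > 0" by (simp add: EM_def)

lemma EM_F: "0 \<le> t \<Longrightarrow> EM a t \<in> borel_measurable (F t)"
  unfolding EM_def using B_F[of t] by measurable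

lemma EM_meas: "0 \<le> t \<Longrightarrow> EM a t \<in> borel_measurable M"
  using EM_F measurable_from_subalg[OF subalg] by blast

lemma EM_step:
  assumes st: "0 \<le> s" "s \<le> t" and A: "A \<in> sets (F s)"
  shows "(\<integral>\<^sup>+\<omega>. ennreal (indicator A \<omega> * EM a t \<omega>) \<partial>M) = (\<integral>\<^sup>+\<omega>. ennreal (indicator A \<omega> * EM a s \<omega>) \<partial>M)"
proof (cases "s = t")
  case True then show ?thesis by simp
next
  case False
  with st have st': "s < t" by simp
  let ?X = "\<lambda>\<omega>. indicator A \<omega> * EM a s \<omega>"
  let ?c = "exp (- (a^2 * (t - s) / 2))"
  have Xm: "?X \<in> borel_measurable (F s)"
    using EM_F[OF st(1)] A by measurable
  have eq: "\<And>\<omega>. indicator A \<omega> * EM a t \<omega> = (?X \<omega> * exp (a * (B t \<omega> - B s \<omega>))) * ?c"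
    by (simp add: EM_def exp_add[symmetric] exp_diff[symmetric] field_simps)
  have "(\<integral>\<^sup>+\<omega>. ennreal (indicator A \<omega> * EM a t \<omega>) \<partial>M)
      = (\<integral>\<^sup>+\<omega>. ennreal (?X \<omega> * exp (a * (B t \<omega> - B s \<omega>))) * ennreal ?c \<partial>M)"
    by (simp add: eq ennreal_mult'' )
  also have "\<dots> = (\<integral>\<^sup>+\<omega>. ennreal (?X \<omega> * exp (a * (B t \<omega> - B s \<omega>))) \<partial>M) * ennreal ?c"
    by (rule nn_integral_multc) (use st st' Xm measurable_from_subalg[OF subalg Xm] in auto)
  also have "(\<integral>\<^sup>+\<omega>. ennreal (?X \<omega> * exp (a * (B t \<omega> - B s \<omega>))) \<partial>M)
     = (\<integral>\<^sup>+\<omega>. ennreal (?X \<omega>) \<partial>M) * (\<integral>\<^sup>+\<omega>. ennreal (exp (a * (B t \<omega> - B s \<omega>))) \<partial>M)"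
    by (rule indep_incr_nn[OF st(1) st' Xm, where g="\<lambda>x. exp (a * x)"]) (auto simp: EM_def)
  also have "(\<integral>\<^sup>+\<omega>. ennreal (exp (a * (B t \<omega> - B s \<omega>))) \<partial>M) = ennreal (exp (a^2 * (t - s) / 2))"
    by (rule mgf_incr[OF st(1) st'])
  finally show ?thesis
    by (simp add: mult.assoc ennreal_mult''[symmetric] exp_add[symmetric])
qed

lemma EM_0: "\<omega> \<in> space M \<Longrightarrow> EM a 0 \<omega> = 1"
  by (simp add: EM_def B0)

lemma EM_int: "0 \<le> t \<Longrightarrow> (\<integral>\<^sup>+\<omega>. ennreal (EM a t \<omega>) \<partial>M) = 1"
proof -
  assume t: "0 \<le> t"
  have sp: "space M \<in> sets (F 0)" using sets.top[of "F 0"] space_F by simp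
  have "(\<integral>\<^sup>+\<omega>. ennreal (EM a t \<omega>) \<partial>M) = (\<integral>\<^sup>+\<omega>. ennreal (indicator (space M) \<omega> * EM a t \<omega>) \<partial>M)"
    by (intro nn_integral_cong) simp
  also have "\<dots> = (\<integral>\<^sup>+\<omega>. ennreal (indicator (space M) \<omega> * EM a 0 \<omega>) \<partial>M)"
    by (rule EM_step[OF _ t sp]) simp
  also have "\<dots> = (\<integral>\<^sup>+\<omega>. 1 \<partial>M)"
    by (intro nn_integral_cong) (simp add: EM_0)
  finally show ?thesis by (simp add: emeasure_space_1)
qed

end

lemma (in prob_space) limit_one:
  fixes Yn Zn :: "nat \<Rightarrow> 'a \<Rightarrow> real" and Y :: "'a \<Rightarrow> real" and c :: real
  assumes Ynm[measurable]: "\<And>n. Yn n \<in> borel_measurable M"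
    and Znm[measurable]: "\<And>n. Zn n \<in> borel_measurable M"
    and Ym[measurable]: "Y \<in> borel_measurable M"
    and Ynn: "\<And>n \<omega>. 0 \<le> Yn n \<omega>" and Znn: "\<And>n \<omega>. 0 \<le> Zn n \<omega>"
    and int1: "\<And>n. (\<integral>\<^sup>+\<omega>. ennreal (Yn n \<omega>) \<partial>M) = 1"
    and intZ: "\<And>n. (\<integral>\<^sup>+\<omega>. ennreal (Zn n \<omega>) \<partial>M) = 1"
    and sq: "\<And>n \<omega>. \<omega> \<in> space M \<Longrightarrow> (Yn n \<omega>)^2 \<le> c * Zn n \<omega>"
    and conv: "\<And>\<omega>. \<omega> \<in> space M \<Longrightarrow> (\<lambda>n. Yn n \<omega>) \<longlonglongrightarrow> Y \<omega>"
  shows "(\<integral>\<^sup>+\<omega>. ennreal (Y \<omega>) \<partial>M) = 1"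
proof -
  have Ynn': "\<And>\<omega>. \<omega> \<in> space M \<Longrightarrow> 0 \<le> Y \<omega>"
    using conv by (rule LIMSEQ_le_const) (use Ynn in auto)
  have "(\<integral>\<^sup>+\<omega>. ennreal (Y \<omega>) \<partial>M) = (\<integral>\<^sup>+\<omega>. liminf (\<lambda>n. ennreal (Yn n \<omega>)) \<partial>M)"
  proof (intro nn_integral_cong)
    fix \<omega> assume "\<omega> \<in> space M"
    then have "(\<lambda>n. ennreal (Yn n \<omega>)) \<longlonglongrightarrow> ennreal (Y \<omega>)"
      using conv by (intro tendsto_ennrealI) auto
    then show "ennreal (Y \<omega>) = liminf (\<lambda>n. ennreal (Yn n \<omega>))"
      by (simp add: lim_imp_Liminf)
  qed
  also have "\<dots> \<le> liminf (\<lambda>n. \<integral>\<^sup>+\<omega>. ennreal (Yn n \<omega>) \<partial>M)"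
    by (rule nn_integral_liminf) simp
  also have "\<dots> = 1" by (simp add: int1 Liminf_const)
  finally have le1: "(\<integral>\<^sup>+\<omega>. ennreal (Y \<omega>) \<partial>M) \<le> 1" .
  have intY: "integrable M Y"
    unfolding integrable_iff_bounded
  proof
    have "(\<integral>\<^sup>+\<omega>. ennreal (norm (Y \<omega>)) \<partial>M) = (\<integral>\<^sup>+\<omega>. ennreal (Y \<omega>) \<partial>M)"
      by (intro nn_integral_cong) (simp add: Ynn')
    then show "(\<integral>\<^sup>+\<omega>. ennreal (norm (Y \<omega>)) \<partial>M) < \<infinity>" using le1
      by (simp add: order_le_less_trans)
  qed simp
  have IY: "ennreal (integral\<^sup>L M Y) = (\<integral>\<^sup>+\<omega>. ennreal (Y \<omega>) \<partial>M)"
    by (rule nn_integral_eq_integral[symmetric]) (use intY Ynn' in auto)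
  have intYn: "integrable M (Yn n) \<and> integral\<^sup>L M (Yn n) = 1" for n
    using nn_integral_eq_integrable[where f="Yn n" and x=1 and M=M] int1 Ynn by auto
  have intZn: "integrable M (Zn n) \<and> integral\<^sup>L M (Zn n) = 1" for n
    using nn_integral_eq_integrable[where f="Zn n" and x=1 and M=M] intZ Znn by auto
  have key: "integral\<^sup>L M Y \<ge> 1 - c / K" if K: "K > 0" for K
  proof -
    have lim: "(\<lambda>n. integral\<^sup>L M (\<lambda>\<omega>. min (Yn n \<omega>) K)) \<longlonglongrightarrow> integral\<^sup>L M (\<lambda>\<omega>. min (Y \<omega>) K)"
    proof (rule integral_dominated_convergence[where w="\<lambda>_. K"])
      show "AE x in M. (\<lambda>n. min (Yn n x) K) \<longlonglongrightarrow> min (Y x) K"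
        using conv by (auto intro!: tendsto_min)
      show "\<And>n. AE x in M. norm (min (Yn n x) K) \<le> K"
        using Ynn K by auto
    qed auto
    have "1 - c / K \<le> integral\<^sup>L M (\<lambda>\<omega>. min (Yn n \<omega>) K)" for n
    proof -
      have imin: "integrable M (\<lambda>\<omega>. min (Yn n \<omega>) K)"
        by (rule integrable_const_bound[where B=K]) (use Ynn K in auto)
      have "1 = integral\<^sup>L M (Yn n)" using intYn by simp
      also have "\<dots> \<le> integral\<^sup>L M (\<lambda>\<omega>. min (Yn n \<omega>) K + c / K * Zn n \<omega>)"
      proof (rule integral_mono)
        show "integrable M (Yn n)" using intYn by simp
        show "integrable M (\<lambda>\<omega>. min (Yn n \<omega>) K + c / K * Zn n \<omega>)"
        proof (rule Bochner_Integration.integrable_add)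
          show "integrable M (\<lambda>\<omega>. min (Yn n \<omega>) K)"
            by (rule integrable_const_bound[where B=K]) (use Ynn K in auto)
          show "integrable M (\<lambda>\<omega>. c / K * Zn n \<omega>)"
            using intZn by (intro integrable_mult_right) auto
        qed
        fix \<omega> assume \<omega>: "\<omega> \<in> space M"
        show "Yn n \<omega> \<le> min (Yn n \<omega>) K + c / K * Zn n \<omega>"
        proof (cases "Yn n \<omega> \<le> K")
          case True
          have "0 \<le> (Yn n \<omega>)^2 / K" using K by simp
          also have "\<dots> \<le> c / K * Zn n \<omega>" using sq[OF \<omega>, of n] K by (simp add: divide_right_mono)
          finally show ?thesis using True by simp
        next
          case False
          have "Yn n \<omega> * K \<le> Yn n \<omega> * Yn n \<omega>" using False K Ynn[of n \<omega>]
            by (intro mult_left_mono) auto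
          then have "Yn n \<omega> \<le> (Yn n \<omega>)^2 / K" using K
            by (simp add: le_divide_eq power2_eq_square)
          also have "\<dots> \<le> c / K * Zn n \<omega>" using sq[OF \<omega>, of n] K by (simp add: divide_right_mono)
          finally show ?thesis using False K by simp
        qed
      qed
      also have "\<dots> = integral\<^sup>L M (\<lambda>\<omega>. min (Yn n \<omega>) K) + c / K"
        by (subst Bochner_Integration.integral_add[OF imin integrable_mult_right[OF intZn[THEN conjunct1]]]) (simp add: intZn)
      finally show ?thesis by simp
    qed
    then have "1 - c / K \<le> integral\<^sup>L M (\<lambda>\<omega>. min (Y \<omega>) K)"
      by (intro LIMSEQ_le_const[OF lim]) auto
    also have "\<dots> \<le> integral\<^sup>L M Y"
      using intY K by (intro integral_mono) (auto intro!: integrable_const_bound[where B=K] simp: Ynn' abs_of_nonneg)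
    finally show ?thesis .
  qed
  have I1: "integral\<^sup>L M Y \<le> 1" using le1 IY by (metis ennreal_le_1)
  have "integral\<^sup>L M Y \<ge> 1"
  proof (rule ccontr)
    assume "\<not> integral\<^sup>L M Y \<ge> 1"
    then have d: "1 - integral\<^sup>L M Y > 0" by simp
    define K where "K = (\<bar>c\<bar> + 1) / (1 - integral\<^sup>L M Y)"
    have K: "K > 0" using d by (simp add: K_def)
    have "c / K = c * (1 - integral\<^sup>L M Y) / (\<bar>c\<bar> + 1)" using d by (simp add: K_def)
    also have "\<dots> < 1 - integral\<^sup>L M Y"
    proof -
      have "c * (1 - integral\<^sup>L M Y) \<le> \<bar>c\<bar> * (1 - integral\<^sup>L M Y)"
        using d by (intro mult_right_mono) auto
      also have "\<dots> < (\<bar>c\<bar> + 1) * (1 - integral\<^sup>L M Y)" using d by simp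
      finally have "c * (1 - integral\<^sup>L M Y) < (1 - integral\<^sup>L M Y) * (\<bar>c\<bar> + 1)"
        by (simp add: mult.commute)
      moreover have "\<bar>c\<bar> + 1 > 0" by simp
      ultimately show ?thesis by (simp add: pos_divide_less_eq)
    qed
    finally show False using key[OF K] by simp
  qed
  with I1 have "integral\<^sup>L M Y = 1" by simp
  with IY show ?thesis by simp
qed


lemma approx_bounds:
  fixes t x :: real and n :: nat assumes t: "t > 0" and x: "x \<ge> 0"
  shows "min x t \<le> t * real (min (2^n) (nat \<lceil>2^n * x / t\<rceil>)) / 2^n
    \<and> t * real (min (2^n) (nat \<lceil>2^n * x / t\<rceil>)) / 2^n \<le> min x t + t / 2^n
    \<and> 0 \<le> t * real (min (2^n) (nat \<lceil>2^n * x / t\<rceil>)) / 2^n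
    \<and> t * real (min (2^n) (nat \<lceil>2^n * x / t\<rceil>)) / 2^n \<le> t"
proof -
  define y where "y = 2^n * x / t"
  define c where "c = \<lceil>y\<rceil>"
  have y0: "y \<ge> 0" using t x by (simp add: y_def)
  have c0: "c \<ge> 0" using y0 by (simp add: c_def)
  have cy: "y \<le> of_int c" "of_int c < y + 1" using ceiling_correct[of y] by (auto simp: c_def)
  have rn: "real (min (2^n) (nat c)) = min (2^n) (of_int c)"
    using c0 by (simp add: min_def)
  define u where "u = t * of_int c / 2^n"
  have p: "(0::real) < 2^n" by simp
  have u1: "u \<ge> x"
  proof -
    have "x = t * y / 2^n" using t by (simp add: y_def)
    also have "\<dots> \<le> u" unfolding u_def using cy(1) t p
      by (intro divide_right_mono mult_left_mono) auto
    finally show ?thesis .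
  qed
  have u2: "u < x + t / 2^n"
  proof -
    have "u < t * (y + 1) / 2^n" unfolding u_def using cy(2) t p
      by (intro divide_strict_right_mono mult_strict_left_mono) auto
    also have "\<dots> = x + t / 2^n" using t by (simp add: y_def field_simps)
    finally show ?thesis .
  qed
  have T: "t * real (min (2^n) (nat \<lceil>2^n * x / t\<rceil>)) / 2^n = min t u"
    unfolding c_def[symmetric] y_def[symmetric] rn u_def using t p
    by (simp add: min_def field_simps)
  show ?thesis unfolding T using u1 u2 t x by (auto simp: min_def)
qed

context bmctx begin

lemma st_nonneg: "is_stopping_time F \<tau> \<Longrightarrow> 0 \<le> \<tau> \<omega>"
  unfolding is_stopping_time_def by auto

lemma st_set: "is_stopping_time F \<tau> \<Longrightarrow> 0 \<le> x \<Longrightarrow> {\<omega>\<in>space M. \<tau> \<omega> \<le> ereal x} \<in> sets (F x)"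
  unfolding is_stopping_time_def using space_F by metis

lemma st_meas: "is_stopping_time F \<tau> \<Longrightarrow> \<tau> \<in> borel_measurable M"
proof (rule borel_measurableI_le)
  fix y :: ereal assume st: "is_stopping_time F \<tau>"
  show "{\<omega>\<in>space M. \<tau> \<omega> \<le> y} \<in> sets M"
  proof (cases y)
    case (real r)
    show ?thesis
    proof (cases "r < 0")
      case True
      then have neg: "ereal r < 0" by simp
      have "{\<omega>\<in>space M. \<tau> \<omega> \<le> y} = {}"
      proof (safe)
        fix \<omega> assume "\<tau> \<omega> \<le> y"
        then show "\<omega> \<in> {}" using st_nonneg[OF st, of \<omega>] neg real by (meson leD order_trans)
      qed
      then show ?thesis by (simp only: sets.empty_sets)
    next
      case False
      then show ?thesis using st_set[OF st, of r] sets_F real by auto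
    qed
  next
    case PInf
    then have "{\<omega>\<in>space M. \<tau> \<omega> \<le> y} = space M" by auto
    then show ?thesis by simp
  next
    case MInf
    have neg: "y < 0" using MInf by simp
    have "{\<omega>\<in>space M. \<tau> \<omega> \<le> y} = {}"
    proof (safe)
      fix \<omega> assume "\<tau> \<omega> \<le> y"
      then show "\<omega> \<in> {}" using st_nonneg[OF st, of \<omega>] neg by (meson leD order_trans)
    qed
    then show ?thesis by (simp only: sets.empty_sets)
  qed
qed

definition sig :: "real \<Rightarrow> nat \<Rightarrow> ('a \<Rightarrow> ereal) \<Rightarrow> 'a \<Rightarrow> nat" where
  "sig t n \<tau> \<omega> = (if \<tau> \<omega> = \<infinity> then 2^n else min (2^n) (nat \<lceil>2^n * real_of_ereal (\<tau> \<omega>) / t\<rceil>))"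

definition tmin :: "('a \<Rightarrow> ereal) \<Rightarrow> real \<Rightarrow> 'a \<Rightarrow> real" where
  "tmin \<tau> t \<omega> = (if \<tau> \<omega> \<le> ereal t then real_of_ereal (\<tau> \<omega>) else t)"

lemma sig_meas: assumes [measurable]: "\<tau> \<in> borel_measurable M"
  shows "sig t n \<tau> \<in> measurable M (count_space UNIV)"
  unfolding sig_def by measurable

lemma sig_le: "sig t n \<tau> \<omega> \<le> 2^n"
  by (simp add: sig_def)

lemma sig_set:
  assumes st: "is_stopping_time F \<tau>" and t: "t > 0" and k: "k < 2^n"
  shows "{\<omega>\<in>space M. k < sig t n \<tau> \<omega>} = {\<omega>\<in>space M. \<not> \<tau> \<omega> \<le> ereal (t * real k / 2^n)}"
proof (intro Collect_cong conj_cong refl)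
  fix \<omega>
  show "(k < sig t n \<tau> \<omega>) = (\<not> \<tau> \<omega> \<le> ereal (t * real k / 2^n))"
  proof (cases "\<tau> \<omega> = \<infinity>")
    case True then show ?thesis using k by (simp add: sig_def)
  next
    case False
    then obtain x where x: "\<tau> \<omega> = ereal x" "x \<ge> 0" using st_nonneg[OF st, of \<omega>]
      by (cases "\<tau> \<omega>") auto
    have "(k < sig t n \<tau> \<omega>) = (k < nat \<lceil>2^n * x / t\<rceil>)"
      using x k by (simp add: sig_def)
    also have "\<dots> = (int k < \<lceil>2^n * x / t\<rceil>)" by linarith
    also have "\<dots> = (real k < 2^n * x / t)" by (simp add: less_ceiling_iff)
    also have "\<dots> = (t * real k / 2^n < x)" using t by (simp add: field_simps)
    finally show ?thesis using x by auto
  qed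
qed

lemma disc_OS:
  assumes st: "is_stopping_time F \<tau>" and t: "t > 0"
  shows "(\<integral>\<^sup>+\<omega>. ennreal (EM a (t * real (sig t n \<tau> \<omega>) / 2^n) \<omega>) \<partial>M) = 1"
proof -
  define Y where "Y k = EM a (t * real (min k (2^n)) / 2^n)" for k
  have Ym: "Y k \<in> borel_measurable M" for k
    unfolding Y_def using t by (intro EM_meas) auto
  have step: "(\<integral>\<^sup>+\<omega>. ennreal (indicator {\<omega>\<in>space M. k < sig t n \<tau> \<omega>} \<omega> * Y (Suc k) \<omega>) \<partial>M)
                 = (\<integral>\<^sup>+\<omega>. ennreal (indicator {\<omega>\<in>space M. k < sig t n \<tau> \<omega>} \<omega> * Y k \<omega>) \<partial>M)" for k
  proof (cases "k < 2^n")
    case True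
    let ?s = "t * real k / 2^n"
    have s0: "0 \<le> ?s" using t by simp
    have A: "{\<omega>\<in>space M. k < sig t n \<tau> \<omega>} \<in> sets (F ?s)"
    proof -
      have "{\<omega>\<in>space M. k < sig t n \<tau> \<omega>} = space (F ?s) - {\<omega>\<in>space M. \<tau> \<omega> \<le> ereal ?s}"
        using sig_set[OF st t True] space_F by auto
      then show ?thesis using st_set[OF st s0] by auto
    qed
    have "Suc k \<le> 2^n" using True by simp
    then have Y1: "Y (Suc k) = EM a (t * real (Suc k) / 2^n)" "Y k = EM a ?s"
      using True by (simp_all add: Y_def)
    show ?thesis unfolding Y1
      by (rule EM_step[OF s0 _ A]) (use t in \<open>auto simp: field_simps\<close>)
  next
    case False
    then have "Y (Suc k) = Y k" by (simp add: Y_def min_def)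
    then show ?thesis by simp
  qed
  have "(\<integral>\<^sup>+\<omega>. ennreal (Y (min (sig t n \<tau> \<omega>) (2^n)) \<omega>) \<partial>M) = (\<integral>\<^sup>+\<omega>. ennreal (Y 0 \<omega>) \<partial>M)"
    by (rule discrete_OS[OF Ym _ sig_meas[OF st_meas[OF st]] step]) (simp add: Y_def EM_def)
  also have "\<dots> = 1" unfolding Y_def using EM_int[of 0 a] by simp
  finally show ?thesis
    using sig_le[of t n \<tau>] by (simp add: Y_def min_absorb1)
qed

end

context bmctx begin

lemma T_props:
  assumes st: "is_stopping_time F \<tau>" and t: "t > 0"
  shows "tmin \<tau> t \<omega> \<le> t * real (sig t n \<tau> \<omega>) / 2^n
    \<and> t * real (sig t n \<tau> \<omega>) / 2^n \<le> tmin \<tau> t \<omega> + t / 2^n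
    \<and> 0 \<le> t * real (sig t n \<tau> \<omega>) / 2^n \<and> t * real (sig t n \<tau> \<omega>) / 2^n \<le> t
    \<and> 0 \<le> tmin \<tau> t \<omega> \<and> tmin \<tau> t \<omega> \<le> t"
proof (cases "\<tau> \<omega> = \<infinity>")
  case True then show ?thesis using t by (simp add: sig_def tmin_def)
next
  case False
  then obtain x where x: "\<tau> \<omega> = ereal x" "x \<ge> 0" using st_nonneg[OF st, of \<omega>]
    by (cases "\<tau> \<omega>") auto
  have tm: "tmin \<tau> t \<omega> = min x t" using x by (simp add: tmin_def min_def)
  have sg: "sig t n \<tau> \<omega> = min (2^n) (nat \<lceil>2^n * x / t\<rceil>)" using x by (simp add: sig_def)
  show ?thesis unfolding tm sg using approx_bounds[OF t x(2), of n] t x(2) by auto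
qed

lemma EM_cont: "\<omega> \<in> space M \<Longrightarrow> continuous_on {0..} (\<lambda>s. EM a s \<omega>)"
  unfolding EM_def using Bcont by (intro continuous_intros) auto

lemma OS:
  assumes st: "is_stopping_time F \<tau>" and t: "t \<ge> 0"
  shows "(\<integral>\<^sup>+\<omega>. ennreal (EM a (tmin \<tau> t \<omega>) \<omega>) \<partial>M) = 1"
proof (cases "t = 0")
  case True
  have "tmin \<tau> t \<omega> = 0" for \<omega>
  proof -
    show ?thesis
    proof (cases "\<tau> \<omega> \<le> ereal 0")
      case True
      then have "\<tau> \<omega> = 0" using st_nonneg[OF st, of \<omega>] by (simp add: zero_ereal_def)
      then show ?thesis using \<open>t = 0\<close> by (simp add: tmin_def)
    qed (use True in \<open>simp add: tmin_def\<close>)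
  qed
  then show ?thesis using EM_int[of 0 a] by simp
next
  case False
  with t have t: "t > 0" by simp
  define T where "T n \<omega> = t * real (sig t n \<tau> \<omega>) / 2^n" for n \<omega>
  have Tp: "tmin \<tau> t \<omega> \<le> T n \<omega> \<and> T n \<omega> \<le> tmin \<tau> t \<omega> + t / 2^n \<and> 0 \<le> T n \<omega> \<and> T n \<omega> \<le> t
    \<and> 0 \<le> tmin \<tau> t \<omega> \<and> tmin \<tau> t \<omega> \<le> t" for n \<omega>
    unfolding T_def by (rule T_props[OF st t])
  have meas: "(\<lambda>\<omega>. EM b (T n \<omega>) \<omega>) \<in> borel_measurable M" for b n
    unfolding T_def
    by (rule measurable_compose_countable[where f="\<lambda>i \<omega>. EM b (t * real i / 2^n) \<omega>" and g="sig t n \<tau>"])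
       (use t sig_meas[OF st_meas[OF st]] in \<open>auto intro!: EM_meas\<close>)
  have tz: "(\<lambda>n. t / 2^n) \<longlonglongrightarrow> 0"
  proof -
    have "(\<lambda>n. t * (1/2::real)^n) \<longlonglongrightarrow> t * 0"
      by (intro tendsto_mult tendsto_const LIMSEQ_realpow_zero) auto
    then show ?thesis by (simp add: power_one_over)
  qed
  have conv: "(\<lambda>n. EM b (T n \<omega>) \<omega>) \<longlonglongrightarrow> EM b (tmin \<tau> t \<omega>) \<omega>" if \<omega>: "\<omega> \<in> space M" for b \<omega>
  proof -
    have "(\<lambda>n. T n \<omega>) \<longlonglongrightarrow> tmin \<tau> t \<omega>"
    proof (rule tendsto_sandwich[where f="\<lambda>n. tmin \<tau> t \<omega>" and h="\<lambda>n. tmin \<tau> t \<omega> + t / 2^n"])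
      show "\<forall>\<^sub>F n in sequentially. tmin \<tau> t \<omega> \<le> T n \<omega>" using Tp by auto
      show "\<forall>\<^sub>F n in sequentially. T n \<omega> \<le> tmin \<tau> t \<omega> + t / 2^n" using Tp by auto
      show "(\<lambda>n. tmin \<tau> t \<omega> + t / 2^n) \<longlonglongrightarrow> tmin \<tau> t \<omega>"
        using tendsto_add[OF tendsto_const tz] by simp
    qed simp
    then show ?thesis
      by (rule continuous_on_tendsto_compose[OF EM_cont[OF \<omega>]]) (use Tp in auto)
  qed
  show ?thesis
  proof (rule limit_one[where Yn="\<lambda>n \<omega>. EM a (T n \<omega>) \<omega>" and Zn="\<lambda>n \<omega>. EM (2*a) (T n \<omega>) \<omega>"
        and c="exp (a^2 * t)"])
    show "\<And>n. (\<lambda>\<omega>. EM a (T n \<omega>) \<omega>) \<in> borel_measurable M" by (rule meas)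
    show "\<And>n. (\<lambda>\<omega>. EM (2*a) (T n \<omega>) \<omega>) \<in> borel_measurable M" by (rule meas)
    show "(\<lambda>\<omega>. EM a (tmin \<tau> t \<omega>) \<omega>) \<in> borel_measurable M"
      by (rule borel_measurable_LIMSEQ_real[OF conv meas])
    show "\<And>n \<omega>. 0 \<le> EM a (T n \<omega>) \<omega>" "\<And>n \<omega>. 0 \<le> EM (2*a) (T n \<omega>) \<omega>"
      using EM_pos less_imp_le by blast+
    show "\<And>n. (\<integral>\<^sup>+\<omega>. ennreal (EM a (T n \<omega>) \<omega>) \<partial>M) = 1"
      unfolding T_def by (rule disc_OS[OF st t])
    show "\<And>n. (\<integral>\<^sup>+\<omega>. ennreal (EM (2*a) (T n \<omega>) \<omega>) \<partial>M) = 1"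
      unfolding T_def by (rule disc_OS[OF st t])
    show "\<And>\<omega>. \<omega> \<in> space M \<Longrightarrow> (\<lambda>n. EM a (T n \<omega>) \<omega>) \<longlonglongrightarrow> EM a (tmin \<tau> t \<omega>) \<omega>"
      by (rule conv)
    fix n \<omega>
    have "(EM a (T n \<omega>) \<omega>)^2 = EM (2*a) (T n \<omega>) \<omega> * exp (a^2 * T n \<omega>)"
      by (simp add: EM_def power2_eq_square exp_add[symmetric] field_simps)
    also have "\<dots> \<le> EM (2*a) (T n \<omega>) \<omega> * exp (a^2 * t)"
      using Tp[of \<omega> n] EM_pos[of "2*a" "T n \<omega>" \<omega>]
      by (intro mult_left_mono) (auto intro!: mult_left_mono)
    finally show "(EM a (T n \<omega>) \<omega>)^2 \<le> exp (a^2 * t) * EM (2*a) (T n \<omega>) \<omega>"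
      by (simp add: mult.commute)
  qed
qed

end

lemma nn_exp_0:
  fixes k :: real assumes k: "k > 0"
  shows "(\<integral>\<^sup>+s. indicator {0..} s * ennreal (exp (- k * s)) \<partial>lborel) = ennreal (1 / k)"
proof -
  interpret P: prob_space "density lborel (exponential_density k)"
    by (rule prob_space_exponential_density[OF k])
  have "1 = emeasure (density lborel (exponential_density k)) (space lborel)"
    using P.emeasure_space_1 by simp
  also have "\<dots> = (\<integral>\<^sup>+s. ennreal (exponential_density k s) \<partial>lborel)"
    by (subst emeasure_density) (auto intro!: nn_integral_cong)
  also have "\<dots> = (\<integral>\<^sup>+s. ennreal k * (indicator {0..} s * ennreal (exp (- k * s))) \<partial>lborel)"
    using k by (intro nn_integral_cong) (auto simp: exponential_density_def indicator_def ennreal_mult mult.commute)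
  also have "\<dots> = ennreal k * (\<integral>\<^sup>+s. indicator {0..} s * ennreal (exp (- k * s)) \<partial>lborel)"
    by (rule nn_integral_cmult) measurable
  finally have e: "1 = ennreal k * (\<integral>\<^sup>+s. indicator {0..} s * ennreal (exp (- k * s)) \<partial>lborel)" .
  have "(\<integral>\<^sup>+s. indicator {0..} s * ennreal (exp (- k * s)) \<partial>lborel)
     = (ennreal (1/k) * ennreal k) * (\<integral>\<^sup>+s. indicator {0..} s * ennreal (exp (- k * s)) \<partial>lborel)"
    using k by (simp add: ennreal_mult[symmetric])
  also have "\<dots> = ennreal (1/k)" unfolding mult.assoc e[symmetric] by simp
  finally show ?thesis .
qed

lemma nn_exp_tail:
  fixes k x :: real assumes k: "k > 0"
  shows "(\<integral>\<^sup>+s. indicator {x..} s * ennreal (exp (- k * s)) \<partial>lborel) = ennreal (exp (- k * x) / k)"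
proof -
  have "(\<integral>\<^sup>+s. indicator {x..} s * ennreal (exp (- k * s)) \<partial>lborel)
     = (\<integral>\<^sup>+u. indicator {x..} (x + 1 * u) * ennreal (exp (- k * (x + 1 * u))) \<partial>lborel)"
    using nn_integral_real_affine[where c=1 and t=x and f="\<lambda>s. indicator {x..} s * ennreal (exp (- k * s))"] by simp
  also have "\<dots> = (\<integral>\<^sup>+u. ennreal (exp (- k * x)) * (indicator {0..} u * ennreal (exp (- k * u))) \<partial>lborel)"
    by (intro nn_integral_cong) (auto simp: indicator_def ennreal_mult[symmetric] exp_add[symmetric] algebra_simps)
  also have "\<dots> = ennreal (exp (- k * x)) * ennreal (1 / k)"
    using nn_exp_0[OF k] by (subst nn_integral_cmult) auto
  finally show ?thesis using k by (simp add: ennreal_mult[symmetric])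
qed

context bmctx begin

definition Bj :: "'a \<times> real \<Rightarrow> real" where
  "Bj x = B (max 0 (snd x)) (fst x)"

lemma Bj_meas[measurable]: "Bj \<in> borel_measurable (M \<Otimes>\<^sub>M lborel)"
proof -
  define u where "u n x = B (max 0 (real_of_int \<lceil>2^n * max 0 (snd x)\<rceil> / 2^n)) (fst x)" for n :: nat and x :: "'a \<times> real"
  have um: "u n \<in> borel_measurable (M \<Otimes>\<^sub>M lborel)" for n
  proof -
    have "(\<lambda>x. B (max 0 (real_of_int (\<lceil>(2::real)^n * max 0 (snd x)\<rceil>) / 2^n)) (fst x)) \<in> borel_measurable (M \<Otimes>\<^sub>M lborel)"
    proof (rule measurable_compose_countable[where f="\<lambda>i x. B (max 0 (real_of_int i / 2^n)) (fst x)" and g="\<lambda>x. \<lceil>(2::real)^n * max 0 (snd x)\<rceil>"])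
      fix i :: int
      show "(\<lambda>x. B (max 0 (real_of_int i / 2^n)) (fst x)) \<in> borel_measurable (M \<Otimes>\<^sub>M lborel)"
        by (rule measurable_compose[OF measurable_fst B_meas]) simp
      show "(\<lambda>x. \<lceil>(2::real)^n * max 0 (snd x)\<rceil>) \<in> measurable (M \<Otimes>\<^sub>M lborel) (count_space UNIV)"
        by (rule measurable_compose[OF _ measurable_real_ceiling]) measurable
    qed
    then show ?thesis unfolding u_def[abs_def] by simp
  qed
  show ?thesis
  proof (rule borel_measurable_LIMSEQ_real[OF _ um])
    fix x :: "'a \<times> real" assume x: "x \<in> space (M \<Otimes>\<^sub>M lborel)"
    then have \<omega>: "fst x \<in> space M" by (auto simp: space_pair_measure)
    define s where "s = max 0 (snd x)"
    have s0: "s \<ge> 0" by (simp add: s_def)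
    have b: "s \<le> real_of_int \<lceil>2^n * s\<rceil> / 2^n \<and> real_of_int \<lceil>2^n * s\<rceil> / 2^n \<le> s + 1 / 2^n" for n :: nat
    proof -
      have c: "2^n * s \<le> real_of_int \<lceil>2^n * s\<rceil>" "real_of_int \<lceil>2^n * s\<rceil> < 2^n * s + 1"
        using ceiling_correct[of "2^n * s"] by auto
      then show ?thesis by (simp add: field_simps)
    qed
    have tz: "(\<lambda>n. 1 / (2::real)^n) \<longlonglongrightarrow> 0"
      by (simp add: LIMSEQ_inverse_realpow_zero divide_inverse)
    have "(\<lambda>n. real_of_int \<lceil>2^n * s\<rceil> / 2^n) \<longlonglongrightarrow> s"
    proof (rule tendsto_sandwich[where f="\<lambda>n. s" and h="\<lambda>n. s + 1 / 2^n"])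
      show "\<forall>\<^sub>F n in sequentially. s \<le> real_of_int \<lceil>2^n * s\<rceil> / 2^n" using b by auto
      show "\<forall>\<^sub>F n in sequentially. real_of_int \<lceil>2^n * s\<rceil> / 2^n \<le> s + 1 / 2^n" using b by auto
      show "(\<lambda>n. s + 1 / 2^n) \<longlonglongrightarrow> s" using tendsto_add[OF tendsto_const tz] by simp
    qed simp
    then have "(\<lambda>n. B (real_of_int \<lceil>2^n * s\<rceil> / 2^n) (fst x)) \<longlonglongrightarrow> B s (fst x)"
      by (rule continuous_on_tendsto_compose[OF Bcont[OF \<omega>]]) (use b s0 in \<open>auto intro!: always_eventually intro: order_trans\<close>)
    moreover have "max 0 (real_of_int \<lceil>2^n * s\<rceil> / 2^n) = real_of_int \<lceil>2^n * s\<rceil> / 2^n" for n :: nat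
      using b[of n] s0 by auto
    ultimately show "(\<lambda>n. u n x) \<longlonglongrightarrow> Bj x" by (simp add: u_def Bj_def s_def)
  qed
qed

lemma Bj_eq: "0 \<le> s \<Longrightarrow> Bj (\<omega>, s) = B s \<omega>"
  by (simp add: Bj_def)

lemma B_tau_meas:
  assumes st: "is_stopping_time F \<tau>" and f[measurable]: "f \<in> borel_measurable (M \<Otimes>\<^sub>M lborel)"
  shows "(\<lambda>\<omega>. f (\<omega>, real_of_ereal (\<tau> \<omega>))) \<in> borel_measurable M"
proof -
  have [measurable]: "\<tau> \<in> borel_measurable M" by (rule st_meas[OF st])
  show ?thesis by measurable
qed

lemma real_tau_nonneg: "is_stopping_time F \<tau> \<Longrightarrow> 0 \<le> real_of_ereal (\<tau> \<omega>)"
  using st_nonneg by (simp add: real_of_ereal_pos)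

lemma EM_tau_meas:
  assumes st: "is_stopping_time F \<tau>"
  shows "(\<lambda>\<omega>. EM a (real_of_ereal (\<tau> \<omega>)) \<omega>) \<in> borel_measurable M"
proof -
  have "(\<lambda>\<omega>. (\<lambda>x. exp (a * Bj x - a^2 * snd x / 2)) (\<omega>, real_of_ereal (\<tau> \<omega>))) \<in> borel_measurable M"
    by (rule B_tau_meas[OF st]) measurable
  then show ?thesis using real_tau_nonneg[OF st] by (simp add: EM_def Bj_eq)
qed

end

context bmctx begin

lemma C1:
  assumes st: "is_stopping_time F \<tau>" and t: "0 \<le> t"
  shows "(\<integral>\<^sup>+\<omega>. ennreal (indicator {\<omega>\<in>space M. \<tau> \<omega> \<le> ereal t} \<omega> * EM a (real_of_ereal (\<tau> \<omega>)) \<omega>) \<partial>M)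
       = (\<integral>\<^sup>+\<omega>. ennreal (indicator {\<omega>\<in>space M. \<tau> \<omega> \<le> ereal t} \<omega> * EM a t \<omega>) \<partial>M)"
proof -
  let ?A = "{\<omega>\<in>space M. \<tau> \<omega> \<le> ereal t}"
  let ?N = "{\<omega>\<in>space M. \<not> \<tau> \<omega> \<le> ereal t}"
  have tm[measurable]: "\<tau> \<in> borel_measurable M" by (rule st_meas[OF st])
  have A[measurable]: "?A \<in> sets M" by measurable
  have N[measurable]: "?N \<in> sets M" by measurable
  have m1[measurable]: "(\<lambda>\<omega>. EM a (real_of_ereal (\<tau> \<omega>)) \<omega>) \<in> borel_measurable M" by (rule EM_tau_meas[OF st])
  have m2[measurable]: "EM a t \<in> borel_measurable M" by (rule EM_meas[OF t])
  define X where "X = (\<integral>\<^sup>+\<omega>. ennreal (indicator ?A \<omega> * EM a (real_of_ereal (\<tau> \<omega>)) \<omega>) \<partial>M)"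
  define W where "W = (\<integral>\<^sup>+\<omega>. ennreal (indicator ?A \<omega> * EM a t \<omega>) \<partial>M)"
  define Z where "Z = (\<integral>\<^sup>+\<omega>. ennreal (indicator ?N \<omega> * EM a t \<omega>) \<partial>M)"
  have "1 = (\<integral>\<^sup>+\<omega>. ennreal (EM a (tmin \<tau> t \<omega>) \<omega>) \<partial>M)" using OS[OF st t] by simp
  also have "\<dots> = (\<integral>\<^sup>+\<omega>. ennreal (indicator ?A \<omega> * EM a (real_of_ereal (\<tau> \<omega>)) \<omega>) + ennreal (indicator ?N \<omega> * EM a t \<omega>) \<partial>M)"
    by (intro nn_integral_cong) (auto simp: tmin_def indicator_def)
  also have "\<dots> = X + Z" unfolding X_def Z_def by (rule nn_integral_add) auto
  finally have XZ: "1 = X + Z" .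
  have "1 = (\<integral>\<^sup>+\<omega>. ennreal (EM a t \<omega>) \<partial>M)" using EM_int[OF t] by simp
  also have "\<dots> = (\<integral>\<^sup>+\<omega>. ennreal (indicator ?A \<omega> * EM a t \<omega>) + ennreal (indicator ?N \<omega> * EM a t \<omega>) \<partial>M)"
    by (intro nn_integral_cong) (auto simp: indicator_def)
  also have "\<dots> = W + Z" unfolding W_def Z_def by (rule nn_integral_add) auto
  finally have WZ: "1 = W + Z" .
  have Zf: "Z \<noteq> \<infinity>"
  proof
    assume "Z = \<infinity>" then have "X + Z = \<infinity>" by simp
    with XZ show False by simp
  qed
  have "Z + X = Z + W" using XZ WZ by (simp add: add.commute)
  then have "X = W" using Zf by (simp add: ennreal_add_left_cancel)
  then show ?thesis unfolding X_def W_def .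
qed

lemma C2:
  assumes st: "is_stopping_time F \<tau>"
  shows "(\<integral>\<^sup>+\<omega>. ennreal (indicator {\<omega>\<in>space M. \<tau> \<omega> \<noteq> \<infinity>} \<omega> * EM a (real_of_ereal (\<tau> \<omega>)) \<omega>) \<partial>M) \<le> 1"
proof -
  have tm[measurable]: "\<tau> \<in> borel_measurable M" by (rule st_meas[OF st])
  have m1[measurable]: "(\<lambda>\<omega>. EM a (real_of_ereal (\<tau> \<omega>)) \<omega>) \<in> borel_measurable M" by (rule EM_tau_meas[OF st])
  define f where "f n \<omega> = ennreal (indicator {\<omega>\<in>space M. \<tau> \<omega> \<le> ereal (real n)} \<omega> * EM a (real_of_ereal (\<tau> \<omega>)) \<omega>)" for n \<omega>
  have fm: "f n \<in> borel_measurable M" for n unfolding f_def by measurable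
  have lim: "liminf (\<lambda>n. f n \<omega>) = ennreal (indicator {\<omega>\<in>space M. \<tau> \<omega> \<noteq> \<infinity>} \<omega> * EM a (real_of_ereal (\<tau> \<omega>)) \<omega>)"
    if \<omega>: "\<omega> \<in> space M" for \<omega>
  proof -
    have "eventually (\<lambda>n. f n \<omega> = ennreal (indicator {\<omega>\<in>space M. \<tau> \<omega> \<noteq> \<infinity>} \<omega> * EM a (real_of_ereal (\<tau> \<omega>)) \<omega>)) sequentially"
    proof (cases "\<tau> \<omega> = \<infinity>")
      case True then show ?thesis by (simp add: f_def indicator_def)
    next
      case False
      then obtain x where x: "\<tau> \<omega> = ereal x" using st_nonneg[OF st, of \<omega>] by (cases "\<tau> \<omega>") auto
      obtain N :: nat where "x \<le> real N" using real_arch_simple by blast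
      then have "\<forall>n\<ge>N. f n \<omega> = ennreal (indicator {\<omega>\<in>space M. \<tau> \<omega> \<noteq> \<infinity>} \<omega> * EM a (real_of_ereal (\<tau> \<omega>)) \<omega>)"
        using x \<omega> by (auto simp: f_def indicator_def)
      then show ?thesis by (auto simp: eventually_sequentially)
    qed
    then have "(\<lambda>n. f n \<omega>) \<longlonglongrightarrow> ennreal (indicator {\<omega>\<in>space M. \<tau> \<omega> \<noteq> \<infinity>} \<omega> * EM a (real_of_ereal (\<tau> \<omega>)) \<omega>)"
      by (rule tendsto_eventually)
    then show ?thesis by (simp add: lim_imp_Liminf)
  qed
  have "(\<integral>\<^sup>+\<omega>. ennreal (indicator {\<omega>\<in>space M. \<tau> \<omega> \<noteq> \<infinity>} \<omega> * EM a (real_of_ereal (\<tau> \<omega>)) \<omega>) \<partial>M)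
      = (\<integral>\<^sup>+\<omega>. liminf (\<lambda>n. f n \<omega>) \<partial>M)"
    by (intro nn_integral_cong) (simp add: lim)
  also have "\<dots> \<le> liminf (\<lambda>n. \<integral>\<^sup>+\<omega>. f n \<omega> \<partial>M)"
    by (rule nn_integral_liminf[OF fm])
  also have "\<dots> \<le> 1"
  proof -
    have "(\<integral>\<^sup>+\<omega>. f n \<omega> \<partial>M) \<le> 1" for n
    proof -
      have "(\<integral>\<^sup>+\<omega>. f n \<omega> \<partial>M) = (\<integral>\<^sup>+\<omega>. ennreal (indicator {\<omega>\<in>space M. \<tau> \<omega> \<le> ereal (real n)} \<omega> * EM a (real n) \<omega>) \<partial>M)"
        unfolding f_def by (rule C1[OF st]) simp
      also have "\<dots> \<le> (\<integral>\<^sup>+\<omega>. ennreal (EM a (real n) \<omega>) \<partial>M)"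
        by (intro nn_integral_mono) (auto simp: indicator_def less_imp_le[OF EM_pos])
      also have "\<dots> = 1" by (rule EM_int) simp
      finally show ?thesis .
    qed
    then have "limsup (\<lambda>n. \<integral>\<^sup>+\<omega>. f n \<omega> \<partial>M) \<le> 1"
      by (intro Limsup_bounded) auto
    then show ?thesis using Liminf_le_Limsup[of sequentially "\<lambda>n. \<integral>\<^sup>+\<omega>. f n \<omega> \<partial>M"]
      by (simp add: order_trans)
  qed
  finally show ?thesis .
qed

lemma OS_bounded:
  assumes st: "is_stopping_time F \<tau>"
    and bound: "\<And>n \<omega>. \<omega> \<in> space M \<Longrightarrow> EM a (tmin \<tau> (real n) \<omega>) \<omega> \<le> K"
    and lim0: "\<And>\<omega>. \<omega> \<in> space M \<Longrightarrow> \<tau> \<omega> = \<infinity> \<Longrightarrow> (\<lambda>n. EM a (real n) \<omega>) \<longlonglongrightarrow> 0"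
  shows "(\<integral>\<^sup>+\<omega>. ennreal (indicator {\<omega>\<in>space M. \<tau> \<omega> \<noteq> \<infinity>} \<omega> * EM a (real_of_ereal (\<tau> \<omega>)) \<omega>) \<partial>M) = 1"
proof -
  have tm[measurable]: "\<tau> \<in> borel_measurable M" by (rule st_meas[OF st])
  have m1[measurable]: "(\<lambda>\<omega>. EM a (real_of_ereal (\<tau> \<omega>)) \<omega>) \<in> borel_measurable M" by (rule EM_tau_meas[OF st])
  define g where "g \<omega> = indicator {\<omega>\<in>space M. \<tau> \<omega> \<noteq> \<infinity>} \<omega> * EM a (real_of_ereal (\<tau> \<omega>)) \<omega>" for \<omega>
  define s where "s n \<omega> = EM a (tmin \<tau> (real n) \<omega>) \<omega>" for n \<omega>
  have gm: "g \<in> borel_measurable M" unfolding g_def by measurable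
  have s_nn: "(\<integral>\<^sup>+\<omega>. ennreal (s n \<omega>) \<partial>M) = 1" for n
    unfolding s_def by (rule OS[OF st]) simp
  have sm: "s n \<in> borel_measurable M" for n
  proof -
    have "(\<lambda>\<omega>. s n \<omega>) = (\<lambda>\<omega>. if \<tau> \<omega> \<le> ereal (real n) then EM a (real_of_ereal (\<tau> \<omega>)) \<omega> else EM a (real n) \<omega>)"
      by (auto simp: s_def tmin_def)
    moreover have "EM a (real n) \<in> borel_measurable M" by (rule EM_meas) simp
    ultimately show ?thesis by simp
  qed
  have s_int: "integrable M (s n) \<and> integral\<^sup>L M (s n) = 1" for n
    using nn_integral_eq_integrable[where f="s n" and x=1 and M=M] s_nn sm
    by (auto simp: s_def less_imp_le[OF EM_pos])
  have aelim: "AE x in M. (\<lambda>i. s i x) \<longlonglongrightarrow> g x"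
  proof (rule AE_I2)
    fix \<omega> assume \<omega>: "\<omega> \<in> space M"
    show "(\<lambda>i. s i \<omega>) \<longlonglongrightarrow> g \<omega>"
    proof (cases "\<tau> \<omega> = \<infinity>")
      case True
      then have "s i \<omega> = EM a (real i) \<omega>" for i by (simp add: s_def tmin_def)
      then show ?thesis using lim0[OF \<omega> True] True by (simp add: g_def)
    next
      case False
      then obtain x where x: "\<tau> \<omega> = ereal x" using st_nonneg[OF st, of \<omega>] by (cases "\<tau> \<omega>") auto
      obtain N :: nat where "x \<le> real N" using real_arch_simple by blast
      then have "\<forall>n\<ge>N. s n \<omega> = g \<omega>"
        using x \<omega> by (auto simp: s_def g_def tmin_def indicator_def)
      then show ?thesis by (intro tendsto_eventually) (auto simp: eventually_sequentially)
    qed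
  qed
  have aeb: "AE x in M. norm (s i x) \<le> K" for i
    using bound by (auto simp: s_def less_imp_le[OF EM_pos])
  have conv: "(\<lambda>n. integral\<^sup>L M (s n)) \<longlonglongrightarrow> integral\<^sup>L M g"
    by (rule integral_dominated_convergence[where w="\<lambda>_. K", OF gm sm _ aelim aeb]) simp
  then have "integral\<^sup>L M g = 1" using s_int by (simp add: LIMSEQ_const_iff)
  moreover have "integrable M g"
    by (rule integrable_dominated_convergence[where w="\<lambda>_. K" and s=s, OF gm sm _ aelim aeb]) simp
  ultimately show ?thesis
    using nn_integral_eq_integral[of M g] unfolding g_def
    by (auto simp: less_imp_le[OF EM_pos])
qed

end

context bmctx begin

lemma gbm_EM: "exp (- r * s) * gbm p \<mu> \<sigma> B s \<omega> = p * (exp ((\<mu> - r) * s) * EM \<sigma> s \<omega>)"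
  by (simp add: gbm_def EM_def exp_add[symmetric] algebra_simps power2_eq_square)

lemma gbm_j_meas[measurable]:
  "(\<lambda>x. gbm p \<mu> \<sigma> B (max 0 (snd x)) (fst x)) \<in> borel_measurable (M \<Otimes>\<^sub>M lborel)"
proof -
  have "(\<lambda>x. p * exp ((\<mu> - \<sigma>\<^sup>2 / 2) * max 0 (snd x) + \<sigma> * Bj x)) \<in> borel_measurable (M \<Otimes>\<^sub>M lborel)"
    by measurable
  then show ?thesis by (simp add: gbm_def Bj_def)
qed

lemma pair_sf: "pair_sigma_finite M lborel"
  by (intro pair_sigma_finite.intro) (auto intro: prob_space_imp_sigma_finite prob_space_axioms lborel.sigma_finite_measure_axioms)

lemma ET:
  assumes rm: "r > \<mu>" and p: "p > 0"
  shows "(\<integral>\<^sup>+\<omega>. (\<integral>\<^sup>+s. ennreal (indicator {0..} s * (exp (- r * s) * gbm p \<mu> \<sigma> B s \<omega>)) \<partial>lborel) \<partial>M)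
        = ennreal (p / (r - \<mu>))"
proof -
  interpret pair_sigma_finite M lborel by (rule pair_sf)
  let ?f = "\<lambda>\<omega> s. ennreal (indicator {0..} s * (exp (- r * s) * gbm p \<mu> \<sigma> B s \<omega>))"
  have eq: "?f = (\<lambda>\<omega> s. ennreal (indicator {0..} s * (exp (- r * max 0 s) * gbm p \<mu> \<sigma> B (max 0 s) \<omega>)))"
    by (auto simp: fun_eq_iff indicator_def)
  have fm: "case_prod ?f \<in> borel_measurable (M \<Otimes>\<^sub>M lborel)"
    unfolding eq by measurable
  have "(\<integral>\<^sup>+\<omega>. (\<integral>\<^sup>+s. ?f \<omega> s \<partial>lborel) \<partial>M) = (\<integral>\<^sup>+s. (\<integral>\<^sup>+\<omega>. ?f \<omega> s \<partial>M) \<partial>lborel)"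
    by (rule Fubini'[OF fm, symmetric])
  also have "\<dots> = (\<integral>\<^sup>+s. ennreal (p / 1) * (indicator {0..} s * ennreal (exp (- (r - \<mu>) * s))) \<partial>lborel)"
  proof (intro nn_integral_cong)
    fix s :: real
    show "(\<integral>\<^sup>+\<omega>. ?f \<omega> s \<partial>M) = ennreal (p / 1) * (indicator {0..} s * ennreal (exp (- (r - \<mu>) * s)))"
    proof (cases "0 \<le> s")
      case True
      have "(\<integral>\<^sup>+\<omega>. ?f \<omega> s \<partial>M) = (\<integral>\<^sup>+\<omega>. ennreal (p * exp ((\<mu> - r) * s)) * ennreal (EM \<sigma> s \<omega>) \<partial>M)"
      proof (intro nn_integral_cong)
        fix \<omega>
        have "exp (- r * s) * gbm p \<mu> \<sigma> B s \<omega> = (p * exp ((\<mu> - r) * s)) * EM \<sigma> s \<omega>"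
          using gbm_EM[of r s p \<mu> \<sigma> \<omega>] by (simp add: mult.assoc)
        then show "?f \<omega> s = ennreal (p * exp ((\<mu> - r) * s)) * ennreal (EM \<sigma> s \<omega>)"
          using True p by (simp add: ennreal_mult[symmetric] less_imp_le[OF EM_pos])
      qed
      also have "\<dots> = ennreal (p * exp ((\<mu> - r) * s)) * (\<integral>\<^sup>+\<omega>. ennreal (EM \<sigma> s \<omega>) \<partial>M)"
        by (rule nn_integral_cmult) (use EM_meas[OF True] in simp)
      also have "\<dots> = ennreal (p * exp ((\<mu> - r) * s))" using EM_int[OF True] by simp
      finally show ?thesis using True p by (simp add: ennreal_mult'' algebra_simps)
    qed simp
  qed
  also have "\<dots> = ennreal (p / 1) * ennreal (exp (- (r - \<mu>) * 0) / (r - \<mu>))"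
    using nn_exp_tail[of "r - \<mu>" 0] rm by (subst nn_integral_cmult) auto
  finally show ?thesis using p rm by (simp add: ennreal_mult''[symmetric])
qed

end

context bmctx begin

lemma EL:
  assumes rm: "r > \<mu>" and p: "p > 0" and st: "is_stopping_time F \<tau>"
  shows "(\<integral>\<^sup>+\<omega>. (\<integral>\<^sup>+s. ennreal (indicator {s. 0 \<le> s \<and> \<tau> \<omega> \<le> ereal s} s * (exp (- r * s) * gbm p \<mu> \<sigma> B s \<omega>)) \<partial>lborel) \<partial>M)
   = (\<integral>\<^sup>+\<omega>. ennreal (indicator {\<omega>\<in>space M. \<tau> \<omega> \<noteq> \<infinity>} \<omega> *
        (exp (- r * real_of_ereal (\<tau> \<omega>)) * gbm p \<mu> \<sigma> B (real_of_ereal (\<tau> \<omega>)) \<omega>) / (r - \<mu>)) \<partial>M)"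
proof -
  interpret pair_sigma_finite M lborel by (rule pair_sf)
  have tm[measurable]: "\<tau> \<in> borel_measurable M" by (rule st_meas[OF st])
  have em[measurable]: "(\<lambda>\<omega>. EM \<sigma> (real_of_ereal (\<tau> \<omega>)) \<omega>) \<in> borel_measurable M" by (rule EM_tau_meas[OF st])
  let ?f = "\<lambda>\<omega> s. ennreal (indicator {s. 0 \<le> s \<and> \<tau> \<omega> \<le> ereal s} s * (exp (- r * s) * gbm p \<mu> \<sigma> B s \<omega>))"
  let ?g = "\<lambda>\<omega> s. ennreal (indicator {s. 0 \<le> s \<and> \<tau> \<omega> \<le> ereal s} s * (p * exp ((\<mu> - r) * s) * EM \<sigma> (real_of_ereal (\<tau> \<omega>)) \<omega>))"
  have eq: "?f = (\<lambda>\<omega> s. ennreal (indicator {s. 0 \<le> s \<and> \<tau> \<omega> \<le> ereal s} s * (exp (- r * max 0 s) * gbm p \<mu> \<sigma> B (max 0 s) \<omega>)))"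
    by (auto simp: fun_eq_iff indicator_def)
  have fm: "case_prod ?f \<in> borel_measurable (M \<Otimes>\<^sub>M lborel)"
    unfolding eq by measurable
  have gm: "case_prod ?g \<in> borel_measurable (M \<Otimes>\<^sub>M lborel)"
    by measurable
  have "(\<integral>\<^sup>+\<omega>. (\<integral>\<^sup>+s. ?f \<omega> s \<partial>lborel) \<partial>M) = (\<integral>\<^sup>+s. (\<integral>\<^sup>+\<omega>. ?f \<omega> s \<partial>M) \<partial>lborel)"
    by (rule Fubini'[OF fm, symmetric])
  also have "\<dots> = (\<integral>\<^sup>+s. (\<integral>\<^sup>+\<omega>. ?g \<omega> s \<partial>M) \<partial>lborel)"
  proof (rule nn_integral_cong)
    fix s :: real
    show "(\<integral>\<^sup>+\<omega>. ?f \<omega> s \<partial>M) = (\<integral>\<^sup>+\<omega>. ?g \<omega> s \<partial>M)"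
    proof (cases "0 \<le> s")
      case True
      let ?A = "{\<omega>\<in>space M. \<tau> \<omega> \<le> ereal s}"
      have "(\<integral>\<^sup>+\<omega>. ?f \<omega> s \<partial>M) = (\<integral>\<^sup>+\<omega>. ennreal (p * exp ((\<mu> - r) * s)) * ennreal (indicator ?A \<omega> * EM \<sigma> s \<omega>) \<partial>M)"
      proof (intro nn_integral_cong)
        fix \<omega> assume \<omega>: "\<omega> \<in> space M"
        have "exp (- r * s) * gbm p \<mu> \<sigma> B s \<omega> = (p * exp ((\<mu> - r) * s)) * EM \<sigma> s \<omega>"
          using gbm_EM[of r s p \<mu> \<sigma> \<omega>] by (simp add: mult.assoc)
        then show "?f \<omega> s = ennreal (p * exp ((\<mu> - r) * s)) * ennreal (indicator ?A \<omega> * EM \<sigma> s \<omega>)"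
          using True p \<omega> by (simp add: ennreal_mult[symmetric] less_imp_le[OF EM_pos] indicator_def)
      qed
      also have "\<dots> = ennreal (p * exp ((\<mu> - r) * s)) * (\<integral>\<^sup>+\<omega>. ennreal (indicator ?A \<omega> * EM \<sigma> s \<omega>) \<partial>M)"
        by (rule nn_integral_cmult) (use EM_meas[OF True] in measurable)
      also have "\<dots> = ennreal (p * exp ((\<mu> - r) * s)) * (\<integral>\<^sup>+\<omega>. ennreal (indicator ?A \<omega> * EM \<sigma> (real_of_ereal (\<tau> \<omega>)) \<omega>) \<partial>M)"
        by (simp only: C1[OF st True])
      also have "\<dots> = (\<integral>\<^sup>+\<omega>. ennreal (p * exp ((\<mu> - r) * s)) * ennreal (indicator ?A \<omega> * EM \<sigma> (real_of_ereal (\<tau> \<omega>)) \<omega>) \<partial>M)"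
        by (rule nn_integral_cmult[symmetric]) measurable
      also have "\<dots> = (\<integral>\<^sup>+\<omega>. ?g \<omega> s \<partial>M)"
        using True p by (intro nn_integral_cong) (simp add: ennreal_mult[symmetric] less_imp_le[OF EM_pos] indicator_def)
      finally show ?thesis .
    next
      case False then show ?thesis by (simp add: indicator_def)
    qed
  qed
  also have "\<dots> = (\<integral>\<^sup>+\<omega>. (\<integral>\<^sup>+s. ?g \<omega> s \<partial>lborel) \<partial>M)"
    by (rule Fubini'[OF gm])
  also have "\<dots> = (\<integral>\<^sup>+\<omega>. ennreal (indicator {\<omega>\<in>space M. \<tau> \<omega> \<noteq> \<infinity>} \<omega> *
        (exp (- r * real_of_ereal (\<tau> \<omega>)) * gbm p \<mu> \<sigma> B (real_of_ereal (\<tau> \<omega>)) \<omega>) / (r - \<mu>)) \<partial>M)"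
  proof (intro nn_integral_cong)
    fix \<omega> assume \<omega>: "\<omega> \<in> space M"
    show "(\<integral>\<^sup>+s. ?g \<omega> s \<partial>lborel) = ennreal (indicator {\<omega>\<in>space M. \<tau> \<omega> \<noteq> \<infinity>} \<omega> *
        (exp (- r * real_of_ereal (\<tau> \<omega>)) * gbm p \<mu> \<sigma> B (real_of_ereal (\<tau> \<omega>)) \<omega>) / (r - \<mu>))"
    proof (cases "\<tau> \<omega> = \<infinity>")
      case True then show ?thesis by (simp add: indicator_def)
    next
      case False
      then obtain x where x: "\<tau> \<omega> = ereal x" "x \<ge> 0" using st_nonneg[OF st, of \<omega>] by (cases "\<tau> \<omega>") auto
      have "(\<integral>\<^sup>+s. ?g \<omega> s \<partial>lborel) = (\<integral>\<^sup>+s. ennreal (p * EM \<sigma> x \<omega>) * (indicator {x..} s * ennreal (exp (- (r - \<mu>) * s))) \<partial>lborel)"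
        using x p by (intro nn_integral_cong) (auto simp: indicator_def ennreal_mult[symmetric] less_imp_le[OF EM_pos] algebra_simps)
      also have "\<dots> = ennreal (p * EM \<sigma> x \<omega>) * ennreal (exp (- (r - \<mu>) * x) / (r - \<mu>))"
        using nn_exp_tail[of "r - \<mu>" x] rm by (subst nn_integral_cmult) auto
      also have "\<dots> = ennreal ((exp (- r * x) * gbm p \<mu> \<sigma> B x \<omega>) / (r - \<mu>))"
        using gbm_EM[of r x p \<mu> \<sigma> \<omega>] p rm
        by (simp add: ennreal_mult[symmetric] less_imp_le[OF EM_pos] algebra_simps)
      finally show ?thesis using x \<omega> by (simp add: indicator_def)
    qed
  qed
  finally show ?thesis .
qed

end

lemma ennreal_eq_sub:
  fixes a :: ennreal and b c :: real
  assumes "a + ennreal b = ennreal c" "0 \<le> b" "0 \<le> c"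
  shows "a = ennreal (c - b) \<and> b \<le> c"
proof -
  have af: "a \<noteq> \<infinity>"
  proof
    assume "a = \<infinity>" then have "a + ennreal b = \<infinity>" by simp
    with assms(1) show False by simp
  qed
  then obtain x where x: "a = ennreal x" "0 \<le> x" by (cases a) auto
  then have "ennreal (x + b) = ennreal c" using assms(1,2) x by (simp add: ennreal_plus)
  then have "x + b = c" using x assms(2,3)
    using ennreal_inj[of "x + b" c] by simp
  then show ?thesis using x assms(2) by auto
qed

lemma exp_K:
  fixes r :: real and t :: ereal assumes r: "r > 0" and t: "t \<ge> 0"
  shows "(\<integral>\<^sup>+s. ennreal (indicator {s. 0 \<le> s \<and> ereal s < t} s * exp (- r * s)) \<partial>lborel)
       = ennreal ((1 - (if t = \<infinity> then 0 else exp (- r * real_of_ereal t))) / r)"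
proof -
  let ?A = "{s. 0 \<le> s \<and> ereal s < t}" and ?Bs = "{s. 0 \<le> s \<and> t \<le> ereal s}"
  have m1: "(\<lambda>s. ennreal (indicator ?A s * exp (- r * s))) \<in> borel_measurable lborel" by measurable
  have m2: "(\<lambda>s. ennreal (indicator ?Bs s * exp (- r * s))) \<in> borel_measurable lborel" by measurable
  have tail: "(\<integral>\<^sup>+s. ennreal (indicator ?Bs s * exp (- r * s)) \<partial>lborel) = ennreal ((if t = \<infinity> then 0 else exp (- r * real_of_ereal t)) / r)"
  proof (cases "t = \<infinity>")
    case True then show ?thesis by (simp add: indicator_def)
  next
    case False
    then obtain x where x: "t = ereal x" "x \<ge> 0" using t by (cases t) auto
    have "(\<integral>\<^sup>+s. ennreal (indicator ?Bs s * exp (- r * s)) \<partial>lborel) = (\<integral>\<^sup>+s. indicator {x..} s * ennreal (exp (- r * s)) \<partial>lborel)"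
      using x by (intro nn_integral_cong) (auto simp: indicator_def)
    also have "\<dots> = ennreal (exp (- r * x) / r)" by (rule nn_exp_tail[OF r])
    finally show ?thesis using x by simp
  qed
  have "(\<integral>\<^sup>+s. ennreal (indicator ?A s * exp (- r * s)) \<partial>lborel) + (\<integral>\<^sup>+s. ennreal (indicator ?Bs s * exp (- r * s)) \<partial>lborel)
      = (\<integral>\<^sup>+s. ennreal (indicator ?A s * exp (- r * s)) + ennreal (indicator ?Bs s * exp (- r * s)) \<partial>lborel)"
    by (rule nn_integral_add[symmetric, OF m1 m2])
  also have "\<dots> = (\<integral>\<^sup>+s. indicator {0..} s * ennreal (exp (- r * s)) \<partial>lborel)"
    by (intro nn_integral_cong) (auto simp: indicator_def not_less)
  also have "\<dots> = ennreal (1 / r)" using nn_exp_0[OF r] by simp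
  finally have "(\<integral>\<^sup>+s. ennreal (indicator ?A s * exp (- r * s)) \<partial>lborel) + ennreal ((if t = \<infinity> then 0 else exp (- r * real_of_ereal t)) / r) = ennreal (1 / r)"
    unfolding tail .
  from ennreal_eq_sub[OF this] r show ?thesis by (simp add: diff_divide_distrib)
qed


context bmctx begin

lemma gbm_pos: "p > 0 \<Longrightarrow> gbm p \<mu> \<sigma> B s \<omega> > 0"
  by (simp add: gbm_def)

lemma gbm_s_meas:
  assumes \<omega>: "\<omega> \<in> space M"
  shows "(\<lambda>s. gbm p \<mu> \<sigma> B (max 0 s) \<omega>) \<in> borel_measurable lborel"
proof -
  have "(\<lambda>s. (\<lambda>x. gbm p \<mu> \<sigma> B (max 0 (snd x)) (fst x)) (\<omega>, s)) \<in> borel_measurable lborel"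
    by (rule measurable_compose[OF measurable_Pair[OF measurable_const[OF \<omega>] measurable_ident_sets[OF refl]] gbm_j_meas])
  then show ?thesis by simp
qed

lemma pathwise:
  assumes r: "r > 0" and p: "p > 0" and st: "is_stopping_time F \<tau>" and \<omega>: "\<omega> \<in> space M"
    and fin: "(\<integral>\<^sup>+s. ennreal (indicator {0..} s * (exp (- r * s) * gbm p \<mu> \<sigma> B s \<omega>)) \<partial>lborel) \<noteq> \<infinity>"
  shows "(LINT s:{s. 0 \<le> s \<and> ereal s < \<tau> \<omega>}|lborel. exp (- r * s) * (gbm p \<mu> \<sigma> B s \<omega> - C))
   = enn2real (\<integral>\<^sup>+s. ennreal (indicator {s. 0 \<le> s \<and> ereal s < \<tau> \<omega>} s * (exp (- r * s) * gbm p \<mu> \<sigma> B s \<omega>)) \<partial>lborel)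
     - C * ((1 - (if \<tau> \<omega> = \<infinity> then 0 else exp (- r * real_of_ereal (\<tau> \<omega>)))) / r)"
proof -
  let ?S = "{s. 0 \<le> s \<and> ereal s < \<tau> \<omega>}"
  define f1 where "f1 s = indicator ?S s * (exp (- r * s) * gbm p \<mu> \<sigma> B s \<omega>)" for s
  define f2 where "f2 s = indicator ?S s * exp (- r * s)" for s :: real
  have gm[measurable]: "(\<lambda>s. gbm p \<mu> \<sigma> B (max 0 s) \<omega>) \<in> borel_measurable lborel" by (rule gbm_s_meas[OF \<omega>])
  have f1eq: "f1 = (\<lambda>s. indicator ?S s * (exp (- r * s) * gbm p \<mu> \<sigma> B (max 0 s) \<omega>))"
    by (auto simp: fun_eq_iff f1_def indicator_def)
  have f1m: "f1 \<in> borel_measurable lborel" unfolding f1eq by measurable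
  have f2m: "f2 \<in> borel_measurable lborel" unfolding f2_def by measurable
  have f1nn: "0 \<le> f1 s" for s using gbm_pos[OF p] by (simp add: f1_def less_imp_le)
  have f2nn: "0 \<le> f2 s" for s by (simp add: f2_def)
  have "(\<integral>\<^sup>+s. ennreal (f1 s) \<partial>lborel) \<le> (\<integral>\<^sup>+s. ennreal (indicator {0..} s * (exp (- r * s) * gbm p \<mu> \<sigma> B s \<omega>)) \<partial>lborel)"
    using gbm_pos[OF p] by (intro nn_integral_mono) (auto simp: f1_def indicator_def less_imp_le)
  then have f1fin: "(\<integral>\<^sup>+s. ennreal (f1 s) \<partial>lborel) < \<infinity>" using fin by (simp add: le_less_trans top.not_eq_extremum)
  have i1: "integrable lborel f1"
    by (rule integrableI_bounded[OF f1m]) (use f1fin f1nn in simp)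
  have I1: "integral\<^sup>L lborel f1 = enn2real (\<integral>\<^sup>+s. ennreal (f1 s) \<partial>lborel)"
    by (rule integral_eq_nn_integral[OF f1m]) (use f1nn in simp)
  have K: "(\<integral>\<^sup>+s. ennreal (f2 s) \<partial>lborel) = ennreal ((1 - (if \<tau> \<omega> = \<infinity> then 0 else exp (- r * real_of_ereal (\<tau> \<omega>)))) / r)"
    unfolding f2_def by (rule exp_K[OF r st_nonneg[OF st]])
  have i2: "integrable lborel f2"
    by (rule integrableI_bounded[OF f2m]) (use K f2nn in simp)
  have Kn: "0 \<le> (1 - (if \<tau> \<omega> = \<infinity> then 0 else exp (- r * real_of_ereal (\<tau> \<omega>)))) / r"
    using r real_tau_nonneg[OF st, of \<omega>] by (auto simp: field_simps)
  have I2: "integral\<^sup>L lborel f2 = (1 - (if \<tau> \<omega> = \<infinity> then 0 else exp (- r * real_of_ereal (\<tau> \<omega>)))) / r"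
    using integral_eq_nn_integral[OF f2m] f2nn K Kn by simp
  have "(LINT s:?S|lborel. exp (- r * s) * (gbm p \<mu> \<sigma> B s \<omega> - C)) = integral\<^sup>L lborel (\<lambda>s. f1 s - C * f2 s)"
    unfolding set_lebesgue_integral_def by (intro Bochner_Integration.integral_cong) (auto simp: f1_def f2_def indicator_def algebra_simps)
  also have "\<dots> = integral\<^sup>L lborel f1 - C * integral\<^sup>L lborel f2"
    using i1 i2 by simp
  finally show ?thesis unfolding I1 I2 f1_def .
qed

end

context bmctx begin

definition Qt :: "real \<Rightarrow> real \<Rightarrow> real \<Rightarrow> real \<Rightarrow> ('a \<Rightarrow> ereal) \<Rightarrow> 'a \<Rightarrow> real" where
  "Qt r p \<mu> \<sigma> \<tau> \<omega> = indicator {\<omega>\<in>space M. \<tau> \<omega> \<noteq> \<infinity>} \<omega> *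
      (exp (- r * real_of_ereal (\<tau> \<omega>)) * gbm p \<mu> \<sigma> B (real_of_ereal (\<tau> \<omega>)) \<omega>)"

definition Et :: "real \<Rightarrow> ('a \<Rightarrow> ereal) \<Rightarrow> 'a \<Rightarrow> real" where
  "Et r \<tau> \<omega> = indicator {\<omega>\<in>space M. \<tau> \<omega> \<noteq> \<infinity>} \<omega> * exp (- r * real_of_ereal (\<tau> \<omega>))"

lemma gbm_tau_meas:
  assumes st: "is_stopping_time F \<tau>"
  shows "(\<lambda>\<omega>. gbm p \<mu> \<sigma> B (real_of_ereal (\<tau> \<omega>)) \<omega>) \<in> borel_measurable M"
proof -
  have "(\<lambda>\<omega>. (\<lambda>x. gbm p \<mu> \<sigma> B (max 0 (snd x)) (fst x)) (\<omega>, real_of_ereal (\<tau> \<omega>))) \<in> borel_measurable M"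
    by (rule B_tau_meas[OF st gbm_j_meas])
  then show ?thesis using real_tau_nonneg[OF st] by simp
qed

lemma Qt_meas[measurable]: "is_stopping_time F \<tau> \<Longrightarrow> Qt r p \<mu> \<sigma> \<tau> \<in> borel_measurable M"
  unfolding Qt_def[abs_def] using st_meas gbm_tau_meas by measurable

lemma Et_meas[measurable]: "is_stopping_time F \<tau> \<Longrightarrow> Et r \<tau> \<in> borel_measurable M"
  unfolding Et_def[abs_def] using st_meas by measurable

lemma Qt_nn: "p > 0 \<Longrightarrow> 0 \<le> Qt r p \<mu> \<sigma> \<tau> \<omega>"
  using gbm_pos[of p] by (simp add: Qt_def less_imp_le)

lemma Et_bound: "is_stopping_time F \<tau> \<Longrightarrow> r > 0 \<Longrightarrow> 0 \<le> Et r \<tau> \<omega> \<and> Et r \<tau> \<omega> \<le> 1"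
  using real_tau_nonneg[of \<tau> \<omega>] by (simp add: Et_def indicator_def)

lemma Et_int: "is_stopping_time F \<tau> \<Longrightarrow> r > 0 \<Longrightarrow> integrable M (Et r \<tau>)"
  by (rule integrable_const_bound[where B=1]) (use Et_bound in auto)

lemma Qt_bound:
  assumes st: "is_stopping_time F \<tau>" and rm: "r > \<mu>" and p: "p > 0"
  shows "Qt r p \<mu> \<sigma> \<tau> \<omega> \<le> p * (indicator {\<omega>\<in>space M. \<tau> \<omega> \<noteq> \<infinity>} \<omega> * EM \<sigma> (real_of_ereal (\<tau> \<omega>)) \<omega>)"
proof -
  let ?x = "real_of_ereal (\<tau> \<omega>)"
  have "exp (- r * ?x) * gbm p \<mu> \<sigma> B ?x \<omega> = p * (exp ((\<mu> - r) * ?x) * EM \<sigma> ?x \<omega>)" by (rule gbm_EM)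
  also have "\<dots> \<le> p * EM \<sigma> ?x \<omega>"
    using real_tau_nonneg[OF st, of \<omega>] rm p EM_pos[of \<sigma> ?x \<omega>]
    by (intro mult_left_mono) (auto simp: mult_nonpos_nonneg)
  finally show ?thesis by (simp add: Qt_def indicator_def)
qed

lemma Qt_int:
  assumes st: "is_stopping_time F \<tau>" and rm: "r > \<mu>" and p: "p > 0"
  shows "integrable M (Qt r p \<mu> \<sigma> \<tau>)"
proof (rule integrableI_bounded)
  show "Qt r p \<mu> \<sigma> \<tau> \<in> borel_measurable M" using st by measurable
  have "(\<integral>\<^sup>+\<omega>. ennreal (norm (Qt r p \<mu> \<sigma> \<tau> \<omega>)) \<partial>M) \<le>
      (\<integral>\<^sup>+\<omega>. ennreal p * ennreal (indicator {\<omega>\<in>space M. \<tau> \<omega> \<noteq> \<infinity>} \<omega> * EM \<sigma> (real_of_ereal (\<tau> \<omega>)) \<omega>) \<partial>M)"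
    using Qt_bound[OF st rm p] Qt_nn[OF p] p
    by (intro nn_integral_mono) (simp add: ennreal_mult[symmetric] less_imp_le[OF EM_pos])
  also have "\<dots> = ennreal p * (\<integral>\<^sup>+\<omega>. ennreal (indicator {\<omega>\<in>space M. \<tau> \<omega> \<noteq> \<infinity>} \<omega> * EM \<sigma> (real_of_ereal (\<tau> \<omega>)) \<omega>) \<partial>M)"
    using st_meas[OF st] EM_tau_meas[OF st] by (intro nn_integral_cmult) measurable
  also have "\<dots> \<le> ennreal p * 1"
    by (intro mult_left_mono C2[OF st]) auto
  finally show "(\<integral>\<^sup>+\<omega>. ennreal (norm (Qt r p \<mu> \<sigma> \<tau> \<omega>)) \<partial>M) < \<infinity>"
    by (simp add: le_less_trans)
qed

end

context bmctx begin

lemma reward_identity: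
  assumes rm: "r > \<mu>" and r: "r > 0" and p: "p > 0" and st: "is_stopping_time F \<tau>"
  shows "stop_reward M r C l1 l0 (gbm p \<mu> \<sigma> B) \<tau>
     = p / (r - \<mu>) - C / r - (1 / (r - \<mu>) + l1) * integral\<^sup>L M (Qt r p \<mu> \<sigma> \<tau>) + (C / r - l0) * integral\<^sup>L M (Et r \<tau>)"
proof -
  interpret pair_sigma_finite M lborel by (rule pair_sf)
  have tm[measurable]: "\<tau> \<in> borel_measurable M" by (rule st_meas[OF st])
  let ?P = "gbm p \<mu> \<sigma> B"
  let ?Ep = "integral\<^sup>L M (Qt r p \<mu> \<sigma> \<tau>)"
  let ?E1 = "integral\<^sup>L M (Et r \<tau>)"
  define J where "J \<omega> = (\<integral>\<^sup>+s. ennreal (indicator {s. 0 \<le> s \<and> ereal s < \<tau> \<omega>} s * (exp (- r * s) * ?P s \<omega>)) \<partial>lborel)" for \<omega>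
  define L where "L \<omega> = (\<integral>\<^sup>+s. ennreal (indicator {s. 0 \<le> s \<and> \<tau> \<omega> \<le> ereal s} s * (exp (- r * s) * ?P s \<omega>)) \<partial>lborel)" for \<omega>
  define T where "T \<omega> = (\<integral>\<^sup>+s. ennreal (indicator {0..} s * (exp (- r * s) * ?P s \<omega>)) \<partial>lborel)" for \<omega>
  have Jeq: "J = (\<lambda>\<omega>. \<integral>\<^sup>+s. ennreal (indicator {s. 0 \<le> s \<and> ereal s < \<tau> \<omega>} s * (exp (- r * s) * gbm p \<mu> \<sigma> B (max 0 s) \<omega>)) \<partial>lborel)"
    by (auto simp: fun_eq_iff J_def indicator_def intro!: nn_integral_cong)
  have Leq: "L = (\<lambda>\<omega>. \<integral>\<^sup>+s. ennreal (indicator {s. 0 \<le> s \<and> \<tau> \<omega> \<le> ereal s} s * (exp (- r * s) * gbm p \<mu> \<sigma> B (max 0 s) \<omega>)) \<partial>lborel)"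
    by (auto simp: fun_eq_iff L_def indicator_def intro!: nn_integral_cong)
  have Teq: "T = (\<lambda>\<omega>. \<integral>\<^sup>+s. ennreal (indicator {0..} s * (exp (- r * s) * gbm p \<mu> \<sigma> B (max 0 s) \<omega>)) \<partial>lborel)"
    by (auto simp: fun_eq_iff T_def indicator_def intro!: nn_integral_cong)
  have Jm[measurable]: "J \<in> borel_measurable M" unfolding Jeq by measurable
  have Lm[measurable]: "L \<in> borel_measurable M" unfolding Leq by measurable
  have Tm[measurable]: "T \<in> borel_measurable M" unfolding Teq by measurable
  have JLT: "J \<omega> + L \<omega> = T \<omega>" if \<omega>: "\<omega> \<in> space M" for \<omega>
  proof -
    have gm[measurable]: "(\<lambda>s. gbm p \<mu> \<sigma> B (max 0 s) \<omega>) \<in> borel_measurable lborel" by (rule gbm_s_meas[OF \<omega>])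
    have "J \<omega> + L \<omega> = (\<integral>\<^sup>+s. ennreal (indicator {s. 0 \<le> s \<and> ereal s < \<tau> \<omega>} s * (exp (- r * s) * gbm p \<mu> \<sigma> B (max 0 s) \<omega>))
        + ennreal (indicator {s. 0 \<le> s \<and> \<tau> \<omega> \<le> ereal s} s * (exp (- r * s) * gbm p \<mu> \<sigma> B (max 0 s) \<omega>)) \<partial>lborel)"
      unfolding Jeq Leq by (rule nn_integral_add[symmetric]) measurable
    also have "\<dots> = T \<omega>" unfolding Teq
      using gbm_pos[OF p] by (intro nn_integral_cong) (auto simp: indicator_def not_less less_imp_le ennreal_mult[symmetric])
    finally show ?thesis .
  qed
  have ETv: "(\<integral>\<^sup>+\<omega>. T \<omega> \<partial>M) = ennreal (p / (r - \<mu>))"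
    unfolding T_def by (rule ET[OF rm p])
  have ELv: "(\<integral>\<^sup>+\<omega>. L \<omega> \<partial>M) = ennreal (?Ep / (r - \<mu>))"
  proof -
    have "(\<integral>\<^sup>+\<omega>. L \<omega> \<partial>M) = (\<integral>\<^sup>+\<omega>. ennreal (Qt r p \<mu> \<sigma> \<tau> \<omega> / (r - \<mu>)) \<partial>M)"
      unfolding L_def Qt_def by (rule EL[OF rm p st])
    also have "\<dots> = ennreal (integral\<^sup>L M (\<lambda>\<omega>. Qt r p \<mu> \<sigma> \<tau> \<omega> / (r - \<mu>)))"
      by (rule nn_integral_eq_integral) (use Qt_int[OF st rm p] Qt_nn[OF p] rm in auto)
    also have "\<dots> = ennreal (?Ep / (r - \<mu>))" by simp
    finally show ?thesis .
  qed
  have Epn: "0 \<le> ?Ep" using Qt_nn[OF p] by (simp add: integral_nonneg_AE)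
  have EJv: "(\<integral>\<^sup>+\<omega>. J \<omega> \<partial>M) = ennreal (p / (r - \<mu>) - ?Ep / (r - \<mu>))"
  proof -
    have "(\<integral>\<^sup>+\<omega>. J \<omega> \<partial>M) + ennreal (?Ep / (r - \<mu>)) = ennreal (p / (r - \<mu>))"
      unfolding ELv[symmetric] ETv[symmetric]
      by (subst nn_integral_add[symmetric]) (auto intro!: nn_integral_cong simp: JLT)
    from ennreal_eq_sub[OF this] Epn rm p show ?thesis by auto
  qed
  have Epp: "?Ep / (r - \<mu>) \<le> p / (r - \<mu>)"
  proof -
    have "(\<integral>\<^sup>+\<omega>. J \<omega> \<partial>M) + ennreal (?Ep / (r - \<mu>)) = ennreal (p / (r - \<mu>))"
      unfolding ELv[symmetric] ETv[symmetric]
      by (subst nn_integral_add[symmetric]) (auto intro!: nn_integral_cong simp: JLT)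
    from ennreal_eq_sub[OF this] Epn rm p show ?thesis by auto
  qed
  have AET: "AE \<omega> in M. T \<omega> \<noteq> \<infinity>"
    by (rule nn_integral_PInf_AE[OF Tm]) (simp add: ETv)
  have AEJ: "AE \<omega> in M. J \<omega> \<noteq> \<infinity>"
    using AET by (rule AE_mp) (auto intro!: AE_I2 simp: JLT[symmetric])
  define R where "R \<omega> = (LINT s:{s. 0 \<le> s \<and> ereal s < \<tau> \<omega>}|lborel. exp (- r * s) * (?P s \<omega> - C))
          - (if \<tau> \<omega> = \<infinity> then 0
             else exp (- r * real_of_ereal (\<tau> \<omega>)) * (l1 * ?P (real_of_ereal (\<tau> \<omega>)) \<omega> + l0))" for \<omega>
  define R' where "R' \<omega> = (enn2real (J \<omega>) - C / r) + C / r * Et r \<tau> \<omega> - l1 * Qt r p \<mu> \<sigma> \<tau> \<omega> - l0 * Et r \<tau> \<omega>" for \<omega>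
  have sr: "stop_reward M r C l1 l0 ?P \<tau> = integral\<^sup>L M R"
    unfolding stop_reward_def R_def ..
  have AER: "AE \<omega> in M. R \<omega> = R' \<omega>"
  proof -
    have *: "T \<omega> \<noteq> \<infinity> \<longrightarrow> R \<omega> = R' \<omega>" if \<omega>: "\<omega> \<in> space M" for \<omega>
    proof
      assume fin: "T \<omega> \<noteq> \<infinity>"
      have pw: "(LINT s:{s. 0 \<le> s \<and> ereal s < \<tau> \<omega>}|lborel. exp (- r * s) * (?P s \<omega> - C))
         = enn2real (J \<omega>) - C * ((1 - (if \<tau> \<omega> = \<infinity> then 0 else exp (- r * real_of_ereal (\<tau> \<omega>)))) / r)"
        unfolding J_def by (rule pathwise[OF r p st \<omega>]) (use fin in \<open>simp add: T_def\<close>)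
      show "R \<omega> = R' \<omega>"
        unfolding R_def R'_def pw using \<omega> r
        by (cases "\<tau> \<omega> = \<infinity>") (auto simp: Qt_def Et_def indicator_def field_simps)
    qed
    from AET show ?thesis by (rule AE_mp) (rule AE_I2, use * in auto)
  qed
  have Rm: "R \<in> borel_measurable M"
  proof -
    have gt[measurable]: "(\<lambda>\<omega>. gbm p \<mu> \<sigma> B (real_of_ereal (\<tau> \<omega>)) \<omega>) \<in> borel_measurable M"
      by (rule gbm_tau_meas[OF st])
    have eq: "R = (\<lambda>\<omega>. (\<integral>s. indicator {s. 0 \<le> s \<and> ereal s < \<tau> \<omega>} s * (exp (- r * s) * (gbm p \<mu> \<sigma> B (max 0 s) \<omega> - C)) \<partial>lborel)
          - (if \<tau> \<omega> = \<infinity> then 0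
             else exp (- r * real_of_ereal (\<tau> \<omega>)) * (l1 * ?P (real_of_ereal (\<tau> \<omega>)) \<omega> + l0)))"
      unfolding R_def[abs_def] set_lebesgue_integral_def
      by (auto simp: fun_eq_iff indicator_def intro!: Bochner_Integration.integral_cong)
    have li: "(\<lambda>\<omega>. \<integral>s. indicator {s. 0 \<le> s \<and> ereal s < \<tau> \<omega>} s * (exp (- r * s) * (gbm p \<mu> \<sigma> B (max 0 s) \<omega> - C)) \<partial>lborel) \<in> borel_measurable M"
      by (rule lborel.borel_measurable_lebesgue_integral) measurable
    show ?thesis unfolding eq using li by measurable
  qed
  have R'm: "R' \<in> borel_measurable M"
    unfolding R'_def[abs_def] using st by measurable
  have nnJ: "(\<integral>\<^sup>+\<omega>. ennreal (enn2real (J \<omega>)) \<partial>M) = (\<integral>\<^sup>+\<omega>. J \<omega> \<partial>M)"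
    using AEJ by (intro nn_integral_cong_AE) (auto simp: ennreal_enn2real_if)
  have iJ: "integrable M (\<lambda>\<omega>. enn2real (J \<omega>))"
    by (rule integrableI_bounded) (use nnJ EJv in auto)
  have IJ: "integral\<^sup>L M (\<lambda>\<omega>. enn2real (J \<omega>)) = p / (r - \<mu>) - ?Ep / (r - \<mu>)"
    by (subst integral_eq_nn_integral) (use nnJ EJv Epp in auto)
  have "integral\<^sup>L M R = integral\<^sup>L M R'"
    by (rule integral_cong_AE[OF Rm R'm AER])
  also have "\<dots> = (p / (r - \<mu>) - ?Ep / (r - \<mu>) - C / r) + C / r * ?E1 - l1 * ?Ep - l0 * ?E1"
    using iJ IJ Qt_int[OF st rm p] Et_int[OF st r] unfolding R'_def by (simp add: prob_space)
  finally show ?thesis unfolding sr by (simp add: algebra_simps add_divide_distrib diff_divide_distrib)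
qed

end

lemma bern:
  fixes u l :: real assumes u: "u > 0" and l: "l \<le> 0 \<or> 1 \<le> l"
  shows "1 + l * (u - 1) \<le> u powr l"
proof (cases "l \<le> 0")
  case True
  have "ln u \<le> u - 1" using ln_le_minus_one u by simp
  then have "l * (u - 1) \<le> l * ln u" using True by (simp add: mult_left_mono_neg)
  also have "1 + l * ln u \<le> exp (l * ln u)" by (rule exp_ge_add_one_self)
  finally show ?thesis using u by (simp add: powr_def)
next
  case False
  with l have l1: "1 \<le> l" by simp
  have "(u powr l) powr (1 / l) * 1 powr (1 - 1 / l) \<le> (1 / l) * (u powr l) + (1 - 1 / l) * 1"
    by (rule Youngs_inequality_0) (use l1 u in auto)
  then have "u \<le> (u powr l) / l + (1 - 1 / l)" using l1 u by (simp add: powr_powr)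
  then have "l * u \<le> l * ((u powr l) / l + (1 - 1 / l))" using l1 by (simp add: mult_left_mono)
  then have "l * u \<le> u powr l + l - 1" using l1 by (simp add: algebra_simps)
  then show ?thesis by (simp add: algebra_simps)
qed

context bmctx begin

lemma gbm_powr_EM:
  assumes p: "p > 0" and q: "r - \<mu> * l - 1/2 * \<sigma>\<^sup>2 * l * (l - 1) = 0"
  shows "exp (- r * x) * (gbm p \<mu> \<sigma> B x \<omega> / p) powr l = EM (l * \<sigma>) x \<omega>"
proof -
  have "gbm p \<mu> \<sigma> B x \<omega> / p = exp ((\<mu> - \<sigma>\<^sup>2 / 2) * x + \<sigma> * B x \<omega>)" using p by (simp add: gbm_def)
  then have "(gbm p \<mu> \<sigma> B x \<omega> / p) powr l = exp (l * ((\<mu> - \<sigma>\<^sup>2 / 2) * x + \<sigma> * B x \<omega>))"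
    by (simp add: powr_def)
  moreover have "r = \<mu> * l + 1/2 * \<sigma>\<^sup>2 * l * (l - 1)" using q by simp
  ultimately show ?thesis
    by (simp add: EM_def exp_add[symmetric] algebra_simps power2_eq_square power_mult_distrib) (simp add: field_simps)
qed

lemma int_ind_EM:
  assumes st: "is_stopping_time F \<tau>"
  shows "integrable M (\<lambda>\<omega>. indicator {\<omega>\<in>space M. \<tau> \<omega> \<noteq> \<infinity>} \<omega> * EM a (real_of_ereal (\<tau> \<omega>)) \<omega>)
     \<and> integral\<^sup>L M (\<lambda>\<omega>. indicator {\<omega>\<in>space M. \<tau> \<omega> \<noteq> \<infinity>} \<omega> * EM a (real_of_ereal (\<tau> \<omega>)) \<omega>) \<le> 1"
proof -
  have tm[measurable]: "\<tau> \<in> borel_measurable M" by (rule st_meas[OF st])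
  have m1[measurable]: "(\<lambda>\<omega>. EM a (real_of_ereal (\<tau> \<omega>)) \<omega>) \<in> borel_measurable M" by (rule EM_tau_meas[OF st])
  let ?f = "\<lambda>\<omega>. indicator {\<omega>\<in>space M. \<tau> \<omega> \<noteq> \<infinity>} \<omega> * EM a (real_of_ereal (\<tau> \<omega>)) \<omega>"
  have fm: "?f \<in> borel_measurable M" by measurable
  have nn: "0 \<le> ?f \<omega>" for \<omega> using EM_pos[of a] by (simp add: less_imp_le)
  have le: "(\<integral>\<^sup>+\<omega>. ennreal (?f \<omega>) \<partial>M) \<le> 1" by (rule C2[OF st])
  have i: "integrable M ?f"
    by (rule integrableI_bounded[OF fm]) (use le nn in \<open>auto simp: le_less_trans\<close>)
  have "ennreal (integral\<^sup>L M ?f) \<le> 1"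
    using le nn_integral_eq_integral[OF i] nn by simp
  then show ?thesis using i by (simp add: ennreal_le_1)
qed

lemma upper_bound:
  assumes rm: "r > \<mu>" and r: "r > 0" and p: "p > 0" and st: "is_stopping_time F \<tau>"
    and q1: "r - \<mu> * l1' - 1/2 * \<sigma>\<^sup>2 * l1' * (l1' - 1) = 0"
    and q2: "r - \<mu> * l2' - 1/2 * \<sigma>\<^sup>2 * l2' * (l2' - 1) = 0"
    and A1: "A1 \<ge> 0" and A2: "A2 \<ge> 0"
    and pw: "\<And>X. X > 0 \<Longrightarrow> c0 - c1 * X \<le> A1 * (X / p) powr l1' + A2 * (X / p) powr l2'"
  shows "c0 * integral\<^sup>L M (Et r \<tau>) - c1 * integral\<^sup>L M (Qt r p \<mu> \<sigma> \<tau>) \<le> A1 + A2"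
proof -
  let ?f1 = "\<lambda>\<omega>. indicator {\<omega>\<in>space M. \<tau> \<omega> \<noteq> \<infinity>} \<omega> * EM (l1' * \<sigma>) (real_of_ereal (\<tau> \<omega>)) \<omega>"
  let ?f2 = "\<lambda>\<omega>. indicator {\<omega>\<in>space M. \<tau> \<omega> \<noteq> \<infinity>} \<omega> * EM (l2' * \<sigma>) (real_of_ereal (\<tau> \<omega>)) \<omega>"
  note i1 = int_ind_EM[OF st, of "l1' * \<sigma>"] and i2 = int_ind_EM[OF st, of "l2' * \<sigma>"]
  have iE: "integrable M (Et r \<tau>)" by (rule Et_int[OF st r])
  have iQ: "integrable M (Qt r p \<mu> \<sigma> \<tau>)" by (rule Qt_int[OF st rm p])
  have "c0 * integral\<^sup>L M (Et r \<tau>) - c1 * integral\<^sup>L M (Qt r p \<mu> \<sigma> \<tau>)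
      = integral\<^sup>L M (\<lambda>\<omega>. c0 * Et r \<tau> \<omega> - c1 * Qt r p \<mu> \<sigma> \<tau> \<omega>)"
    using iE iQ by simp
  also have "\<dots> \<le> integral\<^sup>L M (\<lambda>\<omega>. A1 * ?f1 \<omega> + A2 * ?f2 \<omega>)"
  proof (rule integral_mono)
    show "integrable M (\<lambda>\<omega>. c0 * Et r \<tau> \<omega> - c1 * Qt r p \<mu> \<sigma> \<tau> \<omega>)" using iE iQ by simp
    show "integrable M (\<lambda>\<omega>. A1 * ?f1 \<omega> + A2 * ?f2 \<omega>)" using i1 i2 by simp
    fix \<omega> assume \<omega>: "\<omega> \<in> space M"
    show "c0 * Et r \<tau> \<omega> - c1 * Qt r p \<mu> \<sigma> \<tau> \<omega> \<le> A1 * ?f1 \<omega> + A2 * ?f2 \<omega>"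
    proof (cases "\<tau> \<omega> = \<infinity>")
      case True then show ?thesis by (simp add: Et_def Qt_def)
    next
      case False
      let ?x = "real_of_ereal (\<tau> \<omega>)" and ?X = "gbm p \<mu> \<sigma> B (real_of_ereal (\<tau> \<omega>)) \<omega>"
      have X: "?X > 0" by (rule gbm_pos[OF p])
      have "c0 * Et r \<tau> \<omega> - c1 * Qt r p \<mu> \<sigma> \<tau> \<omega> = exp (- r * ?x) * (c0 - c1 * ?X)"
        using False \<omega> by (simp add: Et_def Qt_def algebra_simps)
      also have "\<dots> \<le> exp (- r * ?x) * (A1 * (?X / p) powr l1' + A2 * (?X / p) powr l2')"
        by (intro mult_left_mono pw X) simp
      also have "\<dots> = A1 * (exp (- r * ?x) * (?X / p) powr l1') + A2 * (exp (- r * ?x) * (?X / p) powr l2')"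
        by (simp add: algebra_simps)
      also have "\<dots> = A1 * ?f1 \<omega> + A2 * ?f2 \<omega>"
        using False \<omega> gbm_powr_EM[OF p q1, of ?x \<omega>] gbm_powr_EM[OF p q2, of ?x \<omega>]
        by (simp add: mult.commute)
      finally show ?thesis .
    qed
  qed
  also have "\<dots> = A1 * integral\<^sup>L M ?f1 + A2 * integral\<^sup>L M ?f2" using i1 i2 by simp
  also have "\<dots> \<le> A1 * 1 + A2 * 1"
    using i1 i2 A1 A2 by (intro add_mono mult_left_mono) auto
  finally show ?thesis by simp
qed

end

context bmctx begin

lemma gbm_cont: "\<omega> \<in> space M \<Longrightarrow> continuous_on {0..} (\<lambda>t. gbm p \<mu> \<sigma> B t \<omega>)"
  unfolding gbm_def using Bcont by (intro continuous_intros) auto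

lemma gbm_F: "0 \<le> t \<Longrightarrow> gbm p \<mu> \<sigma> B t \<in> borel_measurable (F t)"
  unfolding gbm_def[abs_def] using B_F[of t] by measurable

lemma gbm_0: "\<omega> \<in> space M \<Longrightarrow> gbm p \<mu> \<sigma> B 0 \<omega> = p"
  by (simp add: gbm_def B0)

lemma cont_near:
  assumes "\<omega> \<in> space M" "0 \<le> x" "e > 0"
  shows "\<exists>d>0. \<forall>s\<ge>0. \<bar>s - x\<bar> < d \<longrightarrow> \<bar>gbm p \<mu> \<sigma> B s \<omega> - gbm p \<mu> \<sigma> B x \<omega>\<bar> < e"
proof -
  have "\<forall>e>0. \<exists>d>0. \<forall>x'\<in>{0..}. \<bar>x' - x\<bar> < d \<longrightarrow> \<bar>gbm p \<mu> \<sigma> B x' \<omega> - gbm p \<mu> \<sigma> B x \<omega>\<bar> < e"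
    using gbm_cont[OF assms(1), of p \<mu> \<sigma>] assms(2) unfolding continuous_on_iff dist_real_def by auto
  then obtain d where "d > 0" "\<forall>x'\<in>{0..}. \<bar>x' - x\<bar> < d \<longrightarrow> \<bar>gbm p \<mu> \<sigma> B x' \<omega> - gbm p \<mu> \<sigma> B x \<omega>\<bar> < e"
    using assms(3) by blast
  then show ?thesis by auto
qed

definition hit :: "real \<Rightarrow> real \<Rightarrow> real \<Rightarrow> real \<Rightarrow> 'a \<Rightarrow> ereal" where
  "hit p \<mu> \<sigma> c \<omega> = Inf {ereal t | t. t > 0 \<and> gbm p \<mu> \<sigma> B t \<omega> \<le> c}"

lemma hit_nonneg: "0 \<le> hit p \<mu> \<sigma> c \<omega>"
  unfolding hit_def by (rule Inf_greatest) auto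

lemma hit_before:
  assumes \<omega>: "\<omega> \<in> space M" and pc: "p \<ge> c" and s: "0 \<le> s" "ereal s < hit p \<mu> \<sigma> c \<omega>"
  shows "gbm p \<mu> \<sigma> B s \<omega> \<ge> c"
proof (cases "s = 0")
  case True then show ?thesis using gbm_0[OF \<omega>] pc by simp
next
  case False
  show ?thesis
  proof (rule ccontr)
    assume "\<not> c \<le> gbm p \<mu> \<sigma> B s \<omega>"
    then have "ereal s \<in> {ereal t | t. t > 0 \<and> gbm p \<mu> \<sigma> B t \<omega> \<le> c}" using s False by auto
    then have "hit p \<mu> \<sigma> c \<omega> \<le> ereal s" unfolding hit_def by (rule Inf_lower)
    then show False using s by simp
  qed
qed

lemma hit_at_le:
  assumes \<omega>: "\<omega> \<in> space M" and x: "hit p \<mu> \<sigma> c \<omega> = ereal x"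
  shows "gbm p \<mu> \<sigma> B x \<omega> \<le> c"
proof (rule ccontr)
  assume "\<not> gbm p \<mu> \<sigma> B x \<omega> \<le> c"
  then have gt: "gbm p \<mu> \<sigma> B x \<omega> - c > 0" by simp
  have x0: "0 \<le> x" using hit_nonneg[of p \<mu> \<sigma> c \<omega>] x by simp
  obtain d where d: "d > 0" "\<And>s. s \<ge> 0 \<Longrightarrow> \<bar>s - x\<bar> < d \<Longrightarrow> \<bar>gbm p \<mu> \<sigma> B s \<omega> - gbm p \<mu> \<sigma> B x \<omega>\<bar> < gbm p \<mu> \<sigma> B x \<omega> - c"
    using cont_near[OF \<omega> x0 gt] by blast
  have "Inf {ereal t | t. t > 0 \<and> gbm p \<mu> \<sigma> B t \<omega> \<le> c} < ereal (x + d)"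
    using x d(1) unfolding hit_def by simp
  then obtain g where g: "g \<in> {ereal t | t. t > 0 \<and> gbm p \<mu> \<sigma> B t \<omega> \<le> c}" "g < ereal (x + d)"
    by (auto simp: Inf_less_iff)
  then obtain t where t: "g = ereal t" "t > 0" "gbm p \<mu> \<sigma> B t \<omega> \<le> c" by auto
  have "hit p \<mu> \<sigma> c \<omega> \<le> g" unfolding hit_def by (rule Inf_lower[OF g(1)])
  then have "x \<le> t" using x t by simp
  moreover have "t < x + d" using g t by simp
  ultimately have "\<bar>t - x\<bar> < d" by simp
  from d(2)[OF _ this] t show False by simp
qed

lemma hit_at_ge:
  assumes \<omega>: "\<omega> \<in> space M" and x: "hit p \<mu> \<sigma> c \<omega> = ereal x" and pc: "p \<ge> c"
  shows "gbm p \<mu> \<sigma> B x \<omega> \<ge> c"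
proof (cases "x = 0")
  case True then show ?thesis using gbm_0[OF \<omega>] pc by simp
next
  case False
  have x0: "0 < x" using hit_nonneg[of p \<mu> \<sigma> c \<omega>] x False by simp
  show ?thesis
  proof (rule ccontr)
    assume "\<not> c \<le> gbm p \<mu> \<sigma> B x \<omega>"
    then have gt: "c - gbm p \<mu> \<sigma> B x \<omega> > 0" by simp
    obtain d where d: "d > 0" "\<And>s. s \<ge> 0 \<Longrightarrow> \<bar>s - x\<bar> < d \<Longrightarrow> \<bar>gbm p \<mu> \<sigma> B s \<omega> - gbm p \<mu> \<sigma> B x \<omega>\<bar> < c - gbm p \<mu> \<sigma> B x \<omega>"
      using cont_near[OF \<omega> _ gt] x0 by (metis less_imp_le)
    define s where "s = max (x / 2) (x - d / 2)"
    have s: "0 < s" "s < x" "\<bar>s - x\<bar> < d" using x0 d(1) by (auto simp: s_def)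
    have "gbm p \<mu> \<sigma> B s \<omega> \<le> c" using d(2)[of s] s by simp
    then have "ereal s \<in> {ereal t | t. t > 0 \<and> gbm p \<mu> \<sigma> B t \<omega> \<le> c}" using s by auto
    then have "hit p \<mu> \<sigma> c \<omega> \<le> ereal s" unfolding hit_def by (rule Inf_lower)
    then show False using s x by simp
  qed
qed

lemma hit_zero:
  assumes \<omega>: "\<omega> \<in> space M" and pc: "p < c"
  shows "hit p \<mu> \<sigma> c \<omega> = 0"
proof -
  have gt: "c - p > 0" using pc by simp
  have "\<exists>d>0. \<forall>s\<ge>0. \<bar>s - 0\<bar> < d \<longrightarrow> \<bar>gbm p \<mu> \<sigma> B s \<omega> - gbm p \<mu> \<sigma> B 0 \<omega>\<bar> < c - p"
    by (rule cont_near[OF \<omega> _ gt]) simp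
  then obtain d where d: "d > 0" "\<And>s. s \<ge> 0 \<Longrightarrow> \<bar>s - 0\<bar> < d \<Longrightarrow> \<bar>gbm p \<mu> \<sigma> B s \<omega> - gbm p \<mu> \<sigma> B 0 \<omega>\<bar> < c - p"
    by blast
  have le: "hit p \<mu> \<sigma> c \<omega> \<le> ereal e" if e: "e > 0" for e
  proof -
    define s where "s = min e d / 2"
    have s: "0 < s" "s < d" "s \<le> e" using e d(1) by (auto simp: s_def)
    have "gbm p \<mu> \<sigma> B s \<omega> \<le> c" using d(2)[of s] s gbm_0[OF \<omega>] by simp
    then have "ereal s \<in> {ereal t | t. t > 0 \<and> gbm p \<mu> \<sigma> B t \<omega> \<le> c}" using s by auto
    then have "hit p \<mu> \<sigma> c \<omega> \<le> ereal s" unfolding hit_def by (rule Inf_lower)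
    then show ?thesis using s by (meson ereal_less_eq(3) order_trans)
  qed
  have "hit p \<mu> \<sigma> c \<omega> \<le> 0"
  proof (rule ccontr)
    assume "\<not> hit p \<mu> \<sigma> c \<omega> \<le> 0"
    then have pos: "0 < hit p \<mu> \<sigma> c \<omega>" by simp
    then obtain e where e: "0 < ereal e" "ereal e < hit p \<mu> \<sigma> c \<omega>" using ereal_dense2 by blast
    then show False using le[of e] by auto
  qed
  then show ?thesis using hit_nonneg[of p \<mu> \<sigma> c \<omega>] by simp
qed

end

lemma rat_near:
  fixes a b s d :: real
  assumes "a < b" "a \<le> s" "s \<le> b" "d > 0"
  shows "\<exists>q\<in>\<rat>. a \<le> q \<and> q \<le> b \<and> \<bar>q - s\<bar> < d"
proof -
  have "max a (s - d) < min b (s + d)" using assms by auto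
  from Rats_dense_in_real[OF this] obtain q where "q \<in> \<rat>" "max a (s - d) < q" "q < min b (s + d)" by blast
  then show ?thesis by (intro bexI[of _ q]) auto
qed

lemma inv_small:
  fixes x :: real assumes "x > 0" shows "\<exists>n::nat. 1 / (real n + 1) < x"
proof -
  obtain n where "inverse (real (Suc n)) < x" using reals_Archimedean[OF assms] by blast
  then show ?thesis by (auto simp: inverse_eq_divide add.commute)
qed

context bmctx begin

lemma Eab_meas:
  assumes ab: "0 \<le> a" "a < b"
  shows "{\<omega>\<in>space M. \<exists>s\<in>{a..b}. gbm p \<mu> \<sigma> B s \<omega> \<le> c} \<in> sets (F b)"
proof -
  let ?P = "gbm p \<mu> \<sigma> B"
  let ?Q = "\<rat> \<inter> {a..b}"
  have eq: "{\<omega>\<in>space M. \<exists>s\<in>{a..b}. ?P s \<omega> \<le> c} = (\<Inter>m::nat. \<Union>q\<in>?Q. {\<omega>\<in>space M. ?P q \<omega> < c + 1 / (real m + 1)})"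
  proof (intro equalityI subsetI)
    fix \<omega> assume "\<omega> \<in> {\<omega>\<in>space M. \<exists>s\<in>{a..b}. ?P s \<omega> \<le> c}"
    then obtain s where \<omega>: "\<omega> \<in> space M" and s: "s \<in> {a..b}" "?P s \<omega> \<le> c" by auto
    have "\<exists>q\<in>?Q. ?P q \<omega> < c + 1 / (real m + 1)" for m :: nat
    proof -
      have e: "1 / (real m + 1) > 0" by simp
      obtain d where d: "d > 0" "\<And>x. x \<ge> 0 \<Longrightarrow> \<bar>x - s\<bar> < d \<Longrightarrow> \<bar>?P x \<omega> - ?P s \<omega>\<bar> < 1 / (real m + 1)"
        using cont_near[OF \<omega> _ e, of s p \<mu> \<sigma>] s ab by auto
      obtain q where q: "q \<in> \<rat>" "a \<le> q" "q \<le> b" "\<bar>q - s\<bar> < d"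
        using rat_near[OF ab(2) _ _ d(1), of s] s by auto
      have "?P q \<omega> < c + 1 / (real m + 1)" using d(2)[of q] q ab s by auto
      then show ?thesis using q by auto
    qed
    then show "\<omega> \<in> (\<Inter>m::nat. \<Union>q\<in>?Q. {\<omega>\<in>space M. ?P q \<omega> < c + 1 / (real m + 1)})"
      using \<omega> by blast
  next
    fix \<omega> assume \<omega>I: "\<omega> \<in> (\<Inter>m::nat. \<Union>q\<in>?Q. {\<omega>\<in>space M. ?P q \<omega> < c + 1 / (real m + 1)})"
    then have \<omega>: "\<omega> \<in> space M" by auto
    show "\<omega> \<in> {\<omega>\<in>space M. \<exists>s\<in>{a..b}. ?P s \<omega> \<le> c}"
    proof (rule ccontr)
      assume "\<omega> \<notin> {\<omega>\<in>space M. \<exists>s\<in>{a..b}. ?P s \<omega> \<le> c}"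
      then have gt: "\<And>s. s \<in> {a..b} \<Longrightarrow> ?P s \<omega> > c" using \<omega> by (force simp: not_le)
      have "continuous_on {a..b} (\<lambda>s. ?P s \<omega>)"
        by (rule continuous_on_subset[OF gbm_cont[OF \<omega>]]) (use ab in auto)
      then obtain s0 where s0: "s0 \<in> {a..b}" "\<And>y. y \<in> {a..b} \<Longrightarrow> ?P s0 \<omega> \<le> ?P y \<omega>"
        using continuous_attains_inf[of "{a..b}" "\<lambda>s. ?P s \<omega>"] ab by auto
      have "?P s0 \<omega> - c > 0" using gt[OF s0(1)] by simp
      then obtain m :: nat where m: "1 / (real m + 1) < ?P s0 \<omega> - c" using inv_small by blast
      from \<omega>I obtain q where q: "q \<in> ?Q" "?P q \<omega> < c + 1 / (real m + 1)" by blast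
      have "?P s0 \<omega> \<le> ?P q \<omega>" using s0(2)[of q] q by auto
      then show False using q m by simp
    qed
  qed
  have cQ: "countable ?Q" by (rule countable_subset[OF _ countable_rat]) auto
  have "(\<Inter>m::nat. \<Union>q\<in>?Q. {\<omega>\<in>space M. ?P q \<omega> < c + 1 / (real m + 1)}) \<in> sets (F b)"
  proof (rule sets.countable_INT)
    show "UNIV \<noteq> {}" by simp
    show "(\<lambda>m::nat. \<Union>q\<in>?Q. {\<omega>\<in>space M. ?P q \<omega> < c + 1 / (real m + 1)}) ` UNIV \<subseteq> sets (F b)"
    proof clarsimp
      fix m :: nat
      show "(\<Union>q\<in>?Q. {\<omega>\<in>space M. ?P q \<omega> < c + 1 / (real m + 1)}) \<in> sets (F b)"
      proof (rule sets.countable_UN''[OF cQ])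
        fix q assume q: "q \<in> ?Q"
        then have q0: "0 \<le> q" "q \<le> b" using ab by auto
        have "{\<omega>\<in>space (F q). ?P q \<omega> < c + 1 / (real m + 1)} \<in> sets (F q)"
          using gbm_F[OF q0(1), of p \<mu> \<sigma>] by measurable
        then show "{\<omega>\<in>space M. ?P q \<omega> < c + 1 / (real m + 1)} \<in> sets (F b)"
          using F_mono[OF q0] space_F by auto
      qed
    qed
  qed
  then show ?thesis unfolding eq .
qed

lemma hit_lt_meas:
  assumes u: "u > 0"
  shows "{\<omega>\<in>space M. hit p \<mu> \<sigma> c \<omega> < ereal u} \<in> sets (F u)"
proof -
  let ?P = "gbm p \<mu> \<sigma> B"
  let ?I = "{ab \<in> \<rat> \<times> \<rat>. 0 < fst ab \<and> fst ab < snd ab \<and> snd ab < u}"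
  have eq: "{\<omega>\<in>space M. hit p \<mu> \<sigma> c \<omega> < ereal u} = (\<Union>ab\<in>?I. {\<omega>\<in>space M. \<exists>s\<in>{fst ab..snd ab}. ?P s \<omega> \<le> c})"
  proof (intro equalityI subsetI)
    fix \<omega> assume "\<omega> \<in> {\<omega>\<in>space M. hit p \<mu> \<sigma> c \<omega> < ereal u}"
    then have \<omega>: "\<omega> \<in> space M" and lt: "hit p \<mu> \<sigma> c \<omega> < ereal u" by auto
    then obtain g where g: "g \<in> {ereal t | t. t > 0 \<and> ?P t \<omega> \<le> c}" "g < ereal u"
      unfolding hit_def by (auto simp: Inf_less_iff)
    then obtain t where t: "t > 0" "?P t \<omega> \<le> c" "t < u" by auto
    obtain a where a: "a \<in> \<rat>" "0 < a" "a < t" using Rats_dense_in_real[OF t(1)] by blast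
    obtain b where b: "b \<in> \<rat>" "t < b" "b < u" using Rats_dense_in_real[OF t(3)] by blast
    show "\<omega> \<in> (\<Union>ab\<in>?I. {\<omega>\<in>space M. \<exists>s\<in>{fst ab..snd ab}. ?P s \<omega> \<le> c})"
      using a b t \<omega> by (intro UN_I[of "(a, b)"]) auto
  next
    fix \<omega> assume "\<omega> \<in> (\<Union>ab\<in>?I. {\<omega>\<in>space M. \<exists>s\<in>{fst ab..snd ab}. ?P s \<omega> \<le> c})"
    then obtain a b s where \<omega>: "\<omega> \<in> space M" and ab: "0 < a" "a < b" "b < u" and s: "s \<in> {a..b}" "?P s \<omega> \<le> c"
      by auto
    then have "ereal s \<in> {ereal t | t. t > 0 \<and> ?P t \<omega> \<le> c}" by auto
    then have "hit p \<mu> \<sigma> c \<omega> \<le> ereal s" unfolding hit_def by (rule Inf_lower)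
    also have "ereal s < ereal u" using s ab by simp
    finally show "\<omega> \<in> {\<omega>\<in>space M. hit p \<mu> \<sigma> c \<omega> < ereal u}" using \<omega> by simp
  qed
  have cI: "countable ?I"
    by (rule countable_subset[OF _ countable_SIGMA[OF countable_rat countable_rat]]) auto
  have "(\<Union>ab\<in>?I. {\<omega>\<in>space M. \<exists>s\<in>{fst ab..snd ab}. ?P s \<omega> \<le> c}) \<in> sets (F u)"
  proof (rule sets.countable_UN''[OF cI])
    fix ab assume ab: "ab \<in> ?I"
    then have "{\<omega>\<in>space M. \<exists>s\<in>{fst ab..snd ab}. ?P s \<omega> \<le> c} \<in> sets (F (snd ab))"
      by (intro Eab_meas) auto
    then show "{\<omega>\<in>space M. \<exists>s\<in>{fst ab..snd ab}. ?P s \<omega> \<le> c} \<in> sets (F u)"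
      using F_mono[of "snd ab" u] ab by auto
  qed
  then show ?thesis unfolding eq .
qed

lemma hit_st: "is_stopping_time F (hit p \<mu> \<sigma> c)"
  unfolding is_stopping_time_def
proof (intro conjI allI impI)
  fix \<omega> show "0 \<le> hit p \<mu> \<sigma> c \<omega>" by (rule hit_nonneg)
next
  fix t :: real assume t: "0 \<le> t"
  show "{\<omega> \<in> space (F t). hit p \<mu> \<sigma> c \<omega> \<le> ereal t} \<in> sets (F t)"
  proof (rule F_rc[OF t])
    fix u assume u: "u > t"
    define d where "d = u - t"
    have d: "d > 0" using u by (simp add: d_def)
    have eq: "{\<omega> \<in> space (F t). hit p \<mu> \<sigma> c \<omega> \<le> ereal t}
       = (\<Inter>n::nat. {\<omega>\<in>space M. hit p \<mu> \<sigma> c \<omega> < ereal (t + d / (real n + 1))})"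
    proof (intro equalityI subsetI)
      fix \<omega> assume "\<omega> \<in> {\<omega> \<in> space (F t). hit p \<mu> \<sigma> c \<omega> \<le> ereal t}"
      then have \<omega>: "\<omega> \<in> space M" "hit p \<mu> \<sigma> c \<omega> \<le> ereal t" using space_F by auto
      have "ereal t < ereal (t + d / (real n + 1))" for n :: nat using d by simp
      then show "\<omega> \<in> (\<Inter>n::nat. {\<omega>\<in>space M. hit p \<mu> \<sigma> c \<omega> < ereal (t + d / (real n + 1))})"
        using \<omega> by (auto intro: le_less_trans)
    next
      fix \<omega> assume \<omega>I: "\<omega> \<in> (\<Inter>n::nat. {\<omega>\<in>space M. hit p \<mu> \<sigma> c \<omega> < ereal (t + d / (real n + 1))})"
      then have \<omega>: "\<omega> \<in> space M" by auto
      have "hit p \<mu> \<sigma> c \<omega> \<le> ereal t"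
      proof (rule ccontr)
        assume "\<not> hit p \<mu> \<sigma> c \<omega> \<le> ereal t"
        then have "ereal t < hit p \<mu> \<sigma> c \<omega>" by simp
        then obtain e where e: "ereal t < ereal e" "ereal e < hit p \<mu> \<sigma> c \<omega>" using ereal_dense2 by blast
        then have "(e - t) / d > 0" using d by simp
        then obtain n :: nat where n: "1 / (real n + 1) < (e - t) / d" using inv_small by blast
        then have "d / (real n + 1) < e - t" using d by (simp add: field_simps)
        then have "ereal (t + d / (real n + 1)) < ereal e" by simp
        moreover have "hit p \<mu> \<sigma> c \<omega> < ereal (t + d / (real n + 1))" using \<omega>I by auto
        ultimately have "hit p \<mu> \<sigma> c \<omega> < ereal e" by (meson less_trans)
        with e(2) show False by simp
      qed
      then show "\<omega> \<in> {\<omega> \<in> space (F t). hit p \<mu> \<sigma> c \<omega> \<le> ereal t}" using \<omega> space_F by auto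
    qed
    have "(\<Inter>n::nat. {\<omega>\<in>space M. hit p \<mu> \<sigma> c \<omega> < ereal (t + d / (real n + 1))}) \<in> sets (F u)"
    proof (rule sets.countable_INT)
      show "UNIV \<noteq> {}" by simp
      show "(\<lambda>n::nat. {\<omega>\<in>space M. hit p \<mu> \<sigma> c \<omega> < ereal (t + d / (real n + 1))}) ` UNIV \<subseteq> sets (F u)"
      proof clarsimp
        fix n :: nat
        have pos: "0 < t + d / (real n + 1)" using t d by (simp add: add_nonneg_pos)
        have "d / (real n + 1) \<le> d / 1" using d by (intro divide_left_mono) auto
        then have le: "t + d / (real n + 1) \<le> u" by (simp add: d_def)
        show "{\<omega>\<in>space M. hit p \<mu> \<sigma> c \<omega> < ereal (t + d / (real n + 1))} \<in> sets (F u)"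
          using hit_lt_meas[OF pos] F_mono[OF less_imp_le[OF pos] le] by auto
      qed
    qed
    then show "{\<omega> \<in> space (F t). hit p \<mu> \<sigma> c \<omega> \<le> ereal t} \<in> sets (F u)" unfolding eq .
  qed
qed

end

context bmctx begin

lemma value_eq:
  assumes st0: "is_stopping_time F \<tau>0"
    and le: "\<And>\<tau>. is_stopping_time F \<tau> \<Longrightarrow> stop_reward M r C l1 l0 P \<tau> \<le> stop_reward M r C l1 l0 P \<tau>0"
  shows "value_G M F r C l1 l0 P = stop_reward M r C l1 l0 P \<tau>0"
  unfolding value_G_def by (rule cSup_eq_maximum) (use st0 le in auto)

lemma inf_st: "is_stopping_time F (\<lambda>\<omega>. \<infinity>)"
  unfolding is_stopping_time_def by auto

lemma reward_inf:
  assumes rm: "r > \<mu>" and r: "r > 0" and p: "p > 0"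
  shows "stop_reward M r C l1 l0 (gbm p \<mu> \<sigma> B) (\<lambda>\<omega>. \<infinity>) = p / (r - \<mu>) - C / r"
proof -
  have "Qt r p \<mu> \<sigma> (\<lambda>\<omega>. \<infinity>) = (\<lambda>_. 0)" "Et r (\<lambda>\<omega>. \<infinity>) = (\<lambda>_. 0)"
    by (auto simp: fun_eq_iff Qt_def Et_def)
  then show ?thesis using reward_identity[OF rm r p inf_st, of C l1 l0 \<sigma>] by simp
qed

end

context bmctx begin
lemma hit_E1:
  assumes r: "r > 0" and p: "p > 0" and c: "c > 0" and pc: "p \<ge> c"
    and q1: "r - \<mu> * l - 1/2 * \<sigma>\<^sup>2 * l * (l - 1) = 0" and l: "l < 0"
  shows "integral\<^sup>L M (Et r (hit p \<mu> \<sigma> c)) = (p / c) powr l"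
    and "integral\<^sup>L M (Qt r p \<mu> \<sigma> (hit p \<mu> \<sigma> c)) = c * integral\<^sup>L M (Et r (hit p \<mu> \<sigma> c))"
proof -
  let ?\<tau> = "hit p \<mu> \<sigma> c"
  let ?P = "gbm p \<mu> \<sigma> B"
  have st: "is_stopping_time F ?\<tau>" by (rule hit_st)
  have Pfin: "?P (real_of_ereal (?\<tau> \<omega>)) \<omega> = c" if w: "\<omega> \<in> space M" "?\<tau> \<omega> \<noteq> \<infinity>" for \<omega>
  proof -
    obtain x where x: "?\<tau> \<omega> = ereal x" using w hit_nonneg[of p \<mu> \<sigma> c \<omega>] by (cases "?\<tau> \<omega>") auto
    show ?thesis using hit_at_le[OF w(1) x] hit_at_ge[OF w(1) x pc] x by simp
  qed
  have QE: "Qt r p \<mu> \<sigma> ?\<tau> \<omega> = c * Et r ?\<tau> \<omega>" if "\<omega> \<in> space M" for \<omega>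
    using Pfin[OF that] by (cases "?\<tau> \<omega> = \<infinity>") (auto simp: Qt_def Et_def indicator_def)
  show "integral\<^sup>L M (Qt r p \<mu> \<sigma> ?\<tau>) = c * integral\<^sup>L M (Et r ?\<tau>)"
  proof -
    have "integral\<^sup>L M (Qt r p \<mu> \<sigma> ?\<tau>) = integral\<^sup>L M (\<lambda>\<omega>. c * Et r ?\<tau> \<omega>)"
      using QE by (intro Bochner_Integration.integral_cong) auto
    then show ?thesis by simp
  qed
  have Pge: "?P s \<omega> \<ge> c" if \<omega>: "\<omega> \<in> space M" and s: "0 \<le> s" "ereal s \<le> ?\<tau> \<omega>" for s \<omega>
  proof (cases "ereal s < ?\<tau> \<omega>")
    case True then show ?thesis using hit_before[OF \<omega> pc s(1)] by simp
  next
    case False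
    then have "?\<tau> \<omega> = ereal s" using s by simp
    then show ?thesis using hit_at_ge[OF \<omega> _ pc] by simp
  qed
  define K where "K = (c / p) powr l"
  have EMb: "EM (l * \<sigma>) s \<omega> \<le> exp (- r * s) * K" if \<omega>: "\<omega> \<in> space M" and s: "0 \<le> s" "ereal s \<le> ?\<tau> \<omega>" for s \<omega>
  proof -
    have "EM (l * \<sigma>) s \<omega> = exp (- r * s) * (?P s \<omega> / p) powr l" using gbm_powr_EM[OF p q1] by simp
    also have "(?P s \<omega> / p) powr l \<le> (c / p) powr l"
      using Pge[OF \<omega> s] p c l by (intro powr_mono2') (auto intro!: divide_right_mono)
    finally show ?thesis unfolding K_def by (simp add: mult_left_mono)
  qed
  have K0: "K \<ge> 0" by (simp add: K_def)
  have os: "(\<integral>\<^sup>+\<omega>. ennreal (indicator {\<omega>\<in>space M. ?\<tau> \<omega> \<noteq> \<infinity>} \<omega> * EM (l * \<sigma>) (real_of_ereal (?\<tau> \<omega>)) \<omega>) \<partial>M) = 1"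
  proof (rule OS_bounded[OF st, where K=K])
    fix n :: nat and \<omega> assume \<omega>: "\<omega> \<in> space M"
    have hn: "0 \<le> ?\<tau> \<omega>" by (rule hit_nonneg)
    have "0 \<le> tmin ?\<tau> (real n) \<omega>" using hn by (simp add: tmin_def real_of_ereal_pos)
    moreover have "ereal (tmin ?\<tau> (real n) \<omega>) \<le> ?\<tau> \<omega>"
    proof (cases "?\<tau> \<omega> \<le> ereal (real n)")
      case True
      then have "?\<tau> \<omega> \<noteq> \<infinity>" by auto
      moreover have "?\<tau> \<omega> \<noteq> -\<infinity>" using hn by auto
      ultimately show ?thesis using True using hn by (simp add: tmin_def ereal_real)
    next
      case False then show ?thesis by (simp add: tmin_def)
    qed
    ultimately have "0 \<le> tmin ?\<tau> (real n) \<omega>" "ereal (tmin ?\<tau> (real n) \<omega>) \<le> ?\<tau> \<omega>" .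
    note e = EMb[OF \<omega> this]
    have "exp (- r * tmin ?\<tau> (real n) \<omega>) \<le> 1" using r \<open>0 \<le> tmin ?\<tau> (real n) \<omega>\<close> by simp
    then have "exp (- r * tmin ?\<tau> (real n) \<omega>) * K \<le> K" using K0 by (intro mult_left_le_one_le) auto
    then show "EM (l * \<sigma>) (tmin ?\<tau> (real n) \<omega>) \<omega> \<le> K" using e by linarith
  next
    fix \<omega> assume \<omega>: "\<omega> \<in> space M" and inf: "?\<tau> \<omega> = \<infinity>"
    have b: "0 \<le> EM (l * \<sigma>) (real n) \<omega> \<and> EM (l * \<sigma>) (real n) \<omega> \<le> exp (- r * real n) * K" for n :: nat
      using EMb[OF \<omega>, of "real n"] inf EM_pos[of "l * \<sigma>" "real n" \<omega>] by auto
    have "(\<lambda>n. exp (- r * real n) * K) \<longlonglongrightarrow> 0 * K"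
    proof (intro tendsto_mult tendsto_const)
      have "(\<lambda>n. exp (- r) ^ n) \<longlonglongrightarrow> 0"
        using r by (intro LIMSEQ_realpow_zero) auto
      moreover have "(\<lambda>n. exp (- r * real n)) = (\<lambda>n. exp (- r) ^ n)"
        by (auto simp: fun_eq_iff exp_of_nat_mult[symmetric] mult.commute)
      ultimately show "(\<lambda>n. exp (- r * real n)) \<longlonglongrightarrow> 0" by simp
    qed
    show "(\<lambda>n. EM (l * \<sigma>) (real n) \<omega>) \<longlonglongrightarrow> 0"
    proof (rule tendsto_sandwich[where f="\<lambda>_. 0" and h="\<lambda>n. exp (- r * real n) * K"])
      show "\<forall>\<^sub>F n in sequentially. 0 \<le> EM (l * \<sigma>) (real n) \<omega>" using b by (intro always_eventually) blast
      show "\<forall>\<^sub>F n in sequentially. EM (l * \<sigma>) (real n) \<omega> \<le> exp (- r * real n) * K" using b by (intro always_eventually) blast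
      show "(\<lambda>n. exp (- r * real n) * K) \<longlonglongrightarrow> 0" using \<open>(\<lambda>n. exp (- r * real n) * K) \<longlonglongrightarrow> 0 * K\<close> by simp
    qed simp
  qed
  have eqf: "indicator {\<omega>\<in>space M. ?\<tau> \<omega> \<noteq> \<infinity>} \<omega> * EM (l * \<sigma>) (real_of_ereal (?\<tau> \<omega>)) \<omega> = (c / p) powr l * Et r ?\<tau> \<omega>"
    if \<omega>: "\<omega> \<in> space M" for \<omega>
  proof (cases "?\<tau> \<omega> = \<infinity>")
    case True then show ?thesis by (simp add: Et_def)
  next
    case False
    have "EM (l * \<sigma>) (real_of_ereal (?\<tau> \<omega>)) \<omega> = exp (- r * real_of_ereal (?\<tau> \<omega>)) * (?P (real_of_ereal (?\<tau> \<omega>)) \<omega> / p) powr l"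
      using gbm_powr_EM[OF p q1] by simp
    then show ?thesis using False \<omega> Pfin[OF \<omega> False] by (simp add: Et_def)
  qed
  have "(\<integral>\<^sup>+\<omega>. ennreal ((c / p) powr l * Et r ?\<tau> \<omega>) \<partial>M) = 1"
  proof -
    have "(\<integral>\<^sup>+\<omega>. ennreal ((c / p) powr l * Et r ?\<tau> \<omega>) \<partial>M) = (\<integral>\<^sup>+\<omega>. ennreal (indicator {\<omega>\<in>space M. ?\<tau> \<omega> \<noteq> \<infinity>} \<omega> * EM (l * \<sigma>) (real_of_ereal (?\<tau> \<omega>)) \<omega>) \<partial>M)"
      by (intro nn_integral_cong) (simp add: eqf)
    then show ?thesis using os by simp
  qed
  then have "integral\<^sup>L M (\<lambda>\<omega>. (c / p) powr l * Et r ?\<tau> \<omega>) = 1"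
    using nn_integral_eq_integrable[where f="\<lambda>\<omega>. (c / p) powr l * Et r ?\<tau> \<omega>" and x=1 and M=M]
      Et_bound[OF st r] st by auto
  then have "(c / p) powr l * integral\<^sup>L M (Et r ?\<tau>) = 1" by simp
  then show "integral\<^sup>L M (Et r ?\<tau>) = (p / c) powr l"
    using p c by (simp add: powr_divide field_simps)
qed

end

lemma roots_sign:
  fixes \<mu> \<sigma> r l1 l2 :: real
  assumes \<sigma>: "\<sigma> > 0" and r: "r > 0" and rm: "r > \<mu>"
    and q1: "r - \<mu> * l1 - 1/2 * \<sigma>\<^sup>2 * l1 * (l1 - 1) = 0"
    and q2: "r - \<mu> * l2 - 1/2 * \<sigma>\<^sup>2 * l2 * (l2 - 1) = 0"
    and lt: "l1 < l2"
  shows "l1 < 0 \<and> 1 < l2"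
proof -
  let ?s = "\<sigma>\<^sup>2 / 2"
  have s: "?s > 0" using \<sigma> by simp
  have "(l1 - l2) * (\<mu> + ?s * (l1 + l2 - 1)) = 0"
    using q1 q2 by (simp add: algebra_simps power2_eq_square) (simp add: field_simps)
  then have mu: "\<mu> = - ?s * (l1 + l2 - 1)" using lt by simp
  have rr: "r = - ?s * (l1 * l2)" using q1 unfolding mu by (simp add: algebra_simps power2_eq_square) (simp add: field_simps)
  have rm': "r - \<mu> = - ?s * ((l1 - 1) * (l2 - 1))" unfolding rr mu by (simp add: field_simps)
  have p1: "l1 * l2 < 0"
  proof -
    have "0 < - ?s * (l1 * l2)" using rr r by simp
    then show ?thesis using s by (simp add: mult_less_0_iff zero_less_mult_iff)
  qed
  have p2: "(l1 - 1) * (l2 - 1) < 0"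
  proof -
    have "0 < - ?s * ((l1 - 1) * (l2 - 1))" using rm' rm by simp
    then show ?thesis using s by (simp add: mult_less_0_iff zero_less_mult_iff)
  qed
  from p1 lt have "l1 < 0" by (auto simp: mult_less_0_iff)
  moreover from p2 lt have "1 < l2" by (auto simp: mult_less_0_iff)
  ultimately show ?thesis by simp
qed

lemma alg_low:
  fixes c0 c1 l1 l2 p pO X :: real
  assumes c1: "c1 > 0" and c0: "c0 > 0" and l1: "l1 < 0" and l2: "l2 > 1" and p: "p > 0" and X: "X > 0"
    and pO: "pO = l1 / (l1 - 1) * (c0 / c1)" and ppO: "p \<le> pO"
  defines "A1 \<equiv> (l2 * (c0 - c1 * p) + c1 * p) / (l2 - l1)"
    and "A2 \<equiv> (- c1 * p - l1 * (c0 - c1 * p)) / (l2 - l1)"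
  shows "A1 \<ge> 0" "A2 \<ge> 0" "A1 + A2 = c0 - c1 * p"
    "c0 - c1 * X \<le> A1 * (X / p) powr l1 + A2 * (X / p) powr l2"
proof -
  have d: "l2 - l1 > 0" using l1 l2 by simp
  have fr: "l1 / (l1 - 1) < 1" "l1 / (l1 - 1) > 0" using l1 by (auto simp: divide_less_eq zero_less_divide_iff)
  have cc: "c0 / c1 > 0" using c0 c1 by simp
  have K: "pO < c0 / c1" unfolding pO using mult_strict_right_mono[OF fr(1) cc] by simp
  have k1: "c1 * pO < c0" using K c1 by (simp add: pos_less_divide_eq mult.commute)
  have k2: "c1 * p \<le> c1 * pO" using ppO c1 by (simp add: mult_left_mono)
  have pK: "c1 * p < c0" using k1 k2 by linarith
  have "0 \<le> l2 * (c0 - c1 * p) + c1 * p" using pK l2 c1 p by (intro add_nonneg_nonneg mult_nonneg_nonneg) auto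
  then show A1: "A1 \<ge> 0" unfolding A1_def using d by simp
  have "c1 * p * (1 - l1) \<le> - l1 * c0"
  proof -
    have "pO * (l1 - 1) = l1 * (c0 / c1)" using pO l1 c1 by (simp add: field_simps)
    then have "c1 * pO * (1 - l1) = - l1 * c0" using c1 by (simp add: field_simps)
    moreover have "c1 * p * (1 - l1) \<le> c1 * pO * (1 - l1)" using ppO c1 l1 by (intro mult_right_mono mult_left_mono) auto
    ultimately show ?thesis by simp
  qed
  then show A2: "A2 \<ge> 0" unfolding A2_def using d by (intro divide_nonneg_pos) (auto simp: algebra_simps)
  show sum: "A1 + A2 = c0 - c1 * p"
  proof -
    have "A1 + A2 = ((l2 * (c0 - c1 * p) + c1 * p) + (- c1 * p - l1 * (c0 - c1 * p))) / (l2 - l1)"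
      unfolding A1_def A2_def by (rule add_divide_distrib[symmetric])
    also have "\<dots> = (c0 - c1 * p) * (l2 - l1) / (l2 - l1)" by (simp add: algebra_simps)
    also have "\<dots> = c0 - c1 * p" using d by simp
    finally show ?thesis .
  qed
  have n1: "A1 * (l2 - l1) = l2 * (c0 - c1 * p) + c1 * p" unfolding A1_def using d by simp
  have n2: "A2 * (l2 - l1) = - c1 * p - l1 * (c0 - c1 * p)" unfolding A2_def using d by simp
  have lin: "l1 * A1 + l2 * A2 = - c1 * p"
  proof -
    have "(l1 * A1 + l2 * A2) * (l2 - l1) = l1 * (A1 * (l2 - l1)) + l2 * (A2 * (l2 - l1))"
      by (simp add: algebra_simps)
    also have "\<dots> = l1 * (l2 * (c0 - c1 * p) + c1 * p) + l2 * (- c1 * p - l1 * (c0 - c1 * p))"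
      by (simp only: n1 n2)
    also have "\<dots> = (- c1 * p) * (l2 - l1)" by (simp add: algebra_simps)
    finally have "(l1 * A1 + l2 * A2) * (l2 - l1) = (- c1 * p) * (l2 - l1)" .
    then show ?thesis using d by (metis mult_right_cancel less_irrefl)
  qed
  have u: "X / p > 0" using X p by simp
  have b1: "1 + l1 * (X / p - 1) \<le> (X / p) powr l1" using bern[OF u] l1 by simp
  have b2: "1 + l2 * (X / p - 1) \<le> (X / p) powr l2" using bern[OF u] l2 by simp
  have "c0 - c1 * X = (A1 + A2) + (l1 * A1 + l2 * A2) * (X / p - 1)"
    unfolding sum lin using p by (simp add: field_simps)
  also have "\<dots> = A1 * (1 + l1 * (X / p - 1)) + A2 * (1 + l2 * (X / p - 1))" by (simp add: algebra_simps)
  also have "\<dots> \<le> A1 * (X / p) powr l1 + A2 * (X / p) powr l2"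
    using A1 A2 b1 b2 by (intro add_mono mult_left_mono) auto
  finally show "c0 - c1 * X \<le> A1 * (X / p) powr l1 + A2 * (X / p) powr l2" .
qed

lemma alg_high:
  fixes c0 c1 l1 p pO X :: real
  assumes c1: "c1 > 0" and c0: "c0 > 0" and l1: "l1 < 0" and p: "p > 0" and X: "X > 0"
    and pO: "pO = l1 / (l1 - 1) * (c0 / c1)"
  shows "c0 - c1 * pO > 0" "l1 * (c0 - c1 * pO) = - c1 * pO"
    "c0 - c1 * X \<le> ((c0 - c1 * pO) * (p / pO) powr l1) * (X / p) powr l1"
proof -
  have f0: "l1 / (l1 - 1) > 0" using l1 by (simp add: zero_less_divide_iff)
  have pO0: "pO > 0" unfolding pO by (rule mult_pos_pos[OF f0 divide_pos_pos[OF c0 c1]])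
  have "pO * (l1 - 1) = l1 * (c0 / c1)" using pO l1 c1 by (simp add: field_simps)
  then show lin: "l1 * (c0 - c1 * pO) = - c1 * pO" using c1 by (simp add: field_simps)
  show pos: "c0 - c1 * pO > 0"
  proof -
    have "l1 * (c0 - c1 * pO) < 0" using lin c1 pO0 by simp
    then show ?thesis using l1 by (simp add: mult_less_0_iff)
  qed
  have u: "X / pO > 0" using X pO0 by simp
  have b: "1 + l1 * (X / pO - 1) \<le> (X / pO) powr l1" using bern[OF u] l1 by simp
  have e1: "l1 * (c0 - c1 * pO) * (X / pO - 1) = - c1 * pO * (X / pO - 1)" using lin by simp
  have "c0 - c1 * X = (c0 - c1 * pO) + l1 * (c0 - c1 * pO) * (X / pO - 1)"
    unfolding e1 using pO0 by (simp add: field_simps)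
  also have "\<dots> = (c0 - c1 * pO) * (1 + l1 * (X / pO - 1))"
  proof -
    have "\<And>a y :: real. a + l1 * a * y = a * (1 + l1 * y)" by (simp add: algebra_simps)
    then show ?thesis by blast
  qed
  also have "\<dots> \<le> (c0 - c1 * pO) * (X / pO) powr l1" using pos b by (intro mult_left_mono) auto
  also have "(X / pO) powr l1 = (p / pO) powr l1 * (X / p) powr l1"
  proof -
    have "(X / pO) powr l1 = ((p / pO) * (X / p)) powr l1" using p by simp
    also have "\<dots> = (p / pO) powr l1 * (X / p) powr l1"
      by (rule powr_mult)
    finally show ?thesis .
  qed
  finally show "c0 - c1 * X \<le> ((c0 - c1 * pO) * (p / pO) powr l1) * (X / p) powr l1" by (simp add: mult.assoc)
qed


theorem theorem5p3:
  fixes M :: "'a measure" and F :: "real \<Rightarrow> 'a measure" and B :: "real \<Rightarrow> 'a \<Rightarrow> real"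
    and \<mu> \<sigma> r C K_O \<delta> l1 l0 lam1 lam2 :: real
  assumes "prob_space M"
    and "usual_filtration M F" and "trivial_F0 M F"
    and "std_brownian_motion M F B"
    and "\<sigma> > 0" and "r > 0" and "\<delta> \<ge> 0"
    and "r > \<mu>"
    and l1_def: "l1 = - (exp ((\<mu> - r) * \<delta>) - 1) / (\<mu> - r)"
    and l0_def: "l0 = - C / r * (exp (- r * \<delta>) - 1) + exp (- r * \<delta>) * K_O"
    and "r - \<mu> * lam1 - 1/2 * \<sigma>\<^sup>2 * lam1 * (lam1 - 1) = 0"
    and "r - \<mu> * lam2 - 1/2 * \<sigma>\<^sup>2 * lam2 * (lam2 - 1) = 0"
    and "lam1 < lam2"
  shows
    "(C \<le> r * K_O \<longrightarrow>
       (\<forall>p>0.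
          let P = gbm p \<mu> \<sigma> B; \<tau>s = (\<lambda>\<omega>. \<infinity>) in
          is_stopping_time F \<tau>s \<and>
          (\<forall>\<tau>. is_stopping_time F \<tau> \<longrightarrow> stop_reward M r C l1 l0 P \<tau> \<le> stop_reward M r C l1 l0 P \<tau>s) \<and>
          stop_reward M r C l1 l0 P \<tau>s = p / (r - \<mu>) - C / r \<and>
          value_G M F r C l1 l0 P = p / (r - \<mu>) - C / r))
     \<and>
     (C > r * K_O \<longrightarrow>
       (let p_O = exp (- \<mu> * \<delta>) * (lam1 / (lam1 - 1)) * (r - \<mu>) * (C / r - K_O);
            A = exp ((\<mu> - r) * \<delta>) * p_O powr (1 - lam1) / (lam1 * (\<mu> - r)) in
        \<forall>p>0.
          let P = gbm p \<mu> \<sigma> B;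
              \<tau>s = (\<lambda>\<omega>. Inf {ereal t | t. t > 0 \<and> P t \<omega> \<le> p_O});
              g = (if p > p_O then A * p powr lam1 + p / (r - \<mu>) - C / r
                   else p / (\<mu> - r) * (exp ((\<mu> - r) * \<delta>) - 1) + C / r * (exp (- r * \<delta>) - 1)
                        - exp (- r * \<delta>) * K_O) in
          is_stopping_time F \<tau>s \<and>
          (\<forall>\<tau>. is_stopping_time F \<tau> \<longrightarrow> stop_reward M r C l1 l0 P \<tau> \<le> stop_reward M r C l1 l0 P \<tau>s) \<and>
          stop_reward M r C l1 l0 P \<tau>s = g \<and>
          value_G M F r C l1 l0 P = g))"
proof -
  interpret bmctx M F B using assms(1,2,4) by (simp add: bmctx_def bmctx_axioms_def)
  have \<sigma>: "\<sigma> > 0" and r: "r > 0" and rm: "r > \<mu>" using assms by auto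
  have q1: "r - \<mu> * lam1 - 1/2 * \<sigma>\<^sup>2 * lam1 * (lam1 - 1) = 0"
    and q2: "r - \<mu> * lam2 - 1/2 * \<sigma>\<^sup>2 * lam2 * (lam2 - 1) = 0" using assms by auto
  have lams: "lam1 < 0 \<and> 1 < lam2" using roots_sign[OF \<sigma> r rm q1 q2] assms(13) by simp
  then have lam1: "lam1 < 0" and lam2: "lam2 > 1" by auto
  define c1 where "c1 = 1 / (r - \<mu>) + l1"
  define c0 where "c0 = C / r - l0"
  have c1v: "c1 = exp ((\<mu> - r) * \<delta>) / (r - \<mu>)"
  proof -
    have "\<mu> - r \<noteq> 0" "r - \<mu> \<noteq> 0" using rm by auto
    then show ?thesis unfolding c1_def l1_def by (simp add: field_simps)
  qed
  have c0v: "c0 = exp (- r * \<delta>) * (C / r - K_O)"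
    unfolding c0_def l0_def by (simp add: algebra_simps)
  have c1pos: "c1 > 0" using rm by (simp add: c1v)
  have RI: "stop_reward M r C l1 l0 (gbm p \<mu> \<sigma> B) \<tau> = p / (r - \<mu>) - C / r
      - c1 * integral\<^sup>L M (Qt r p \<mu> \<sigma> \<tau>) + c0 * integral\<^sup>L M (Et r \<tau>)"
    if "p > 0" "is_stopping_time F \<tau>" for p \<tau>
    using reward_identity[OF rm r that] unfolding c0_def c1_def .
  have Qnn: "integral\<^sup>L M (Qt r p \<mu> \<sigma> \<tau>) \<ge> 0" if "p > 0" for p \<tau>
    using Qt_nn[OF that] by (simp add: integral_nonneg_AE)
  have Enn: "integral\<^sup>L M (Et r \<tau>) \<ge> 0" for \<tau>
    by (simp add: integral_nonneg_AE Et_def)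
  show ?thesis
  proof (intro conjI impI)
    assume CK: "C \<le> r * K_O"
    have c0neg: "c0 \<le> 0"
    proof -
      have "C / r - K_O \<le> 0" using CK r by (simp add: divide_le_eq mult.commute)
      then show ?thesis unfolding c0v by (simp add: mult_nonneg_nonpos)
    qed
    show "\<forall>p>0. let P = gbm p \<mu> \<sigma> B; \<tau>s = (\<lambda>\<omega>. \<infinity>) in
          is_stopping_time F \<tau>s \<and>
          (\<forall>\<tau>. is_stopping_time F \<tau> \<longrightarrow> stop_reward M r C l1 l0 P \<tau> \<le> stop_reward M r C l1 l0 P \<tau>s) \<and>
          stop_reward M r C l1 l0 P \<tau>s = p / (r - \<mu>) - C / r \<and>
          value_G M F r C l1 l0 P = p / (r - \<mu>) - C / r"
    proof (intro allI impI)
      fix p :: real assume p: "p > 0"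
      have le: "stop_reward M r C l1 l0 (gbm p \<mu> \<sigma> B) \<tau> \<le> stop_reward M r C l1 l0 (gbm p \<mu> \<sigma> B) (\<lambda>\<omega>. \<infinity>)"
        if st: "is_stopping_time F \<tau>" for \<tau>
      proof -
        have "c1 * integral\<^sup>L M (Qt r p \<mu> \<sigma> \<tau>) \<ge> 0" using c1pos Qnn[OF p] by simp
        moreover have "c0 * integral\<^sup>L M (Et r \<tau>) \<le> 0" using c0neg Enn[of \<tau>] by (simp add: mult_nonpos_nonneg)
        ultimately show ?thesis unfolding RI[OF p st] reward_inf[OF rm r p] by simp
      qed
      show "let P = gbm p \<mu> \<sigma> B; \<tau>s = (\<lambda>\<omega>. \<infinity>) in
          is_stopping_time F \<tau>s \<and>
          (\<forall>\<tau>. is_stopping_time F \<tau> \<longrightarrow> stop_reward M r C l1 l0 P \<tau> \<le> stop_reward M r C l1 l0 P \<tau>s) \<and>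
          stop_reward M r C l1 l0 P \<tau>s = p / (r - \<mu>) - C / r \<and>
          value_G M F r C l1 l0 P = p / (r - \<mu>) - C / r"
        unfolding Let_def using inf_st le reward_inf[OF rm r p] value_eq[OF inf_st le] by auto
    qed
  next
    assume CK: "C > r * K_O"
    define pO where "pO = exp (- \<mu> * \<delta>) * (lam1 / (lam1 - 1)) * (r - \<mu>) * (C / r - K_O)"
    define AA where "AA = exp ((\<mu> - r) * \<delta>) * pO powr (1 - lam1) / (lam1 * (\<mu> - r))"
    have CK': "C / r - K_O > 0" using CK r by (simp add: less_divide_eq mult.commute)
    have c0pos: "c0 > 0" unfolding c0v using CK' by simp
    have pO': "pO = lam1 / (lam1 - 1) * (c0 / c1)"
    proof -
      have "c0 / c1 = exp (- \<mu> * \<delta>) * (r - \<mu>) * (C / r - K_O)"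
      proof -
        have "exp (- r * \<delta>) = exp (- \<mu> * \<delta>) * exp ((\<mu> - r) * \<delta>)" by (simp add: exp_add[symmetric] algebra_simps)
        then show ?thesis unfolding c0v c1v using rm by (simp add: field_simps)
      qed
      then show ?thesis unfolding pO_def by simp
    qed
    have pO0: "pO > 0" using alg_high(1)[OF c1pos c0pos lam1 _ _ pO', of 1 1] by (smt (verit) c0pos c1pos divide_pos_pos lam1 mult_pos_pos pO' zero_less_divide_iff)
    have Aid: "AA * p powr lam1 = (c0 - c1 * pO) * (p / pO) powr lam1" if p: "p > 0" for p
    proof -
      have lin: "lam1 * (c0 - c1 * pO) = - c1 * pO" by (rule alg_high(2)[OF c1pos c0pos lam1 p p pO'])
      have "c0 - c1 * pO = exp ((\<mu> - r) * \<delta>) * pO / (lam1 * (\<mu> - r))"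
        using lin lam1 rm unfolding c1v by (simp add: field_simps)
      moreover have "pO powr (1 - lam1) = pO / pO powr lam1" using pO0 by (simp add: powr_diff)
      moreover have "(p / pO) powr lam1 = p powr lam1 / pO powr lam1" using p pO0 by (simp add: powr_divide)
      ultimately show ?thesis unfolding AA_def by (simp add: field_simps)
    qed
    have hit_eq: "(\<lambda>\<omega>. Inf {ereal t |t. t > 0 \<and> gbm p \<mu> \<sigma> B t \<omega> \<le> pO}) = hit p \<mu> \<sigma> pO" for p
      by (simp add: fun_eq_iff hit_def)
    have gval: "p / (\<mu> - r) * (exp ((\<mu> - r) * \<delta>) - 1) + C / r * (exp (- r * \<delta>) - 1) - exp (- r * \<delta>) * K_O
        = p / (r - \<mu>) - C / r + (c0 - c1 * p)" for p
    proof -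
      have a: "p / (\<mu> - r) * (exp ((\<mu> - r) * \<delta>) - 1) = - l1 * p"
      proof -
        have "\<mu> - r \<noteq> 0" using rm by simp
        then show ?thesis unfolding l1_def by (simp add: field_simps)
      qed
      have b: "C / r * (exp (- r * \<delta>) - 1) - exp (- r * \<delta>) * K_O = - l0" unfolding l0_def by (simp add: algebra_simps)
      have c: "p / (r - \<mu>) - C / r + (c0 - c1 * p) = - l1 * p - l0" unfolding c0_def c1_def by (simp add: algebra_simps)
      show ?thesis using a b c by linarith
    qed
    have main: "is_stopping_time F (hit p \<mu> \<sigma> pO) \<and>
          (\<forall>\<tau>. is_stopping_time F \<tau> \<longrightarrow> stop_reward M r C l1 l0 (gbm p \<mu> \<sigma> B) \<tau> \<le> stop_reward M r C l1 l0 (gbm p \<mu> \<sigma> B) (hit p \<mu> \<sigma> pO)) \<and>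
          stop_reward M r C l1 l0 (gbm p \<mu> \<sigma> B) (hit p \<mu> \<sigma> pO) = G \<and>
          value_G M F r C l1 l0 (gbm p \<mu> \<sigma> B) = G"
      if p: "p > 0" and G: "G = (if p > pO then AA * p powr lam1 + p / (r - \<mu>) - C / r
                   else p / (\<mu> - r) * (exp ((\<mu> - r) * \<delta>) - 1) + C / r * (exp (- r * \<delta>) - 1)
                        - exp (- r * \<delta>) * K_O)" for p G
    proof -
      let ?\<tau> = "hit p \<mu> \<sigma> pO"
      have st: "is_stopping_time F ?\<tau>" by (rule hit_st)
      have Gv: "G = p / (r - \<mu>) - C / r + (if p > pO then (c0 - c1 * pO) * (p / pO) powr lam1 else c0 - c1 * p)"
        unfolding G using Aid[OF p] gval[of p] by simp
      have rew: "stop_reward M r C l1 l0 (gbm p \<mu> \<sigma> B) ?\<tau> = G"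
      proof (cases "p < pO")
        case True
        have z: "?\<tau> \<omega> = 0" if "\<omega> \<in> space M" for \<omega> using hit_zero[OF that True] .
        have iQ: "integral\<^sup>L M (Qt r p \<mu> \<sigma> ?\<tau>) = p"
        proof -
          have "integral\<^sup>L M (Qt r p \<mu> \<sigma> ?\<tau>) = integral\<^sup>L M (\<lambda>_. p)"
            by (intro Bochner_Integration.integral_cong) (auto simp: Qt_def z gbm_0)
          then show ?thesis by (simp add: prob_space)
        qed
        have iE: "integral\<^sup>L M (Et r ?\<tau>) = 1"
        proof -
          have "integral\<^sup>L M (Et r ?\<tau>) = integral\<^sup>L M (\<lambda>_. 1)"
            by (intro Bochner_Integration.integral_cong) (auto simp: Et_def z)
          then show ?thesis by (simp add: prob_space)
        qed
        show ?thesis unfolding RI[OF p st] iQ iE Gv using True by simp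
      next
        case False
        then have ppO: "p \<ge> pO" by simp
        note h = hit_E1[OF r p pO0 ppO q1 lam1]
        have "stop_reward M r C l1 l0 (gbm p \<mu> \<sigma> B) ?\<tau> = p / (r - \<mu>) - C / r + (c0 - c1 * pO) * (p / pO) powr lam1"
          unfolding RI[OF p st] h(2) h(1) by (simp add: algebra_simps)
        moreover have "\<not> p > pO \<Longrightarrow> p = pO" using ppO by simp
        ultimately show ?thesis unfolding Gv using pO0 by auto
      qed
      have ub: "stop_reward M r C l1 l0 (gbm p \<mu> \<sigma> B) \<tau> \<le> G" if st': "is_stopping_time F \<tau>" for \<tau>
      proof (cases "p > pO")
        case True
        let ?A1 = "(c0 - c1 * pO) * (p / pO) powr lam1"
        have A1: "?A1 \<ge> 0" using alg_high(1)[OF c1pos c0pos lam1 p p pO'] by simp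
        have "c0 * integral\<^sup>L M (Et r \<tau>) - c1 * integral\<^sup>L M (Qt r p \<mu> \<sigma> \<tau>) \<le> ?A1 + 0"
        proof (rule upper_bound[OF rm r p st' q1 q2 A1 order.refl])
          fix X :: real assume X: "X > 0"
          show "c0 - c1 * X \<le> ?A1 * (X / p) powr lam1 + 0 * (X / p) powr lam2"
            using alg_high(3)[OF c1pos c0pos lam1 p X pO'] by simp
        qed
        then show ?thesis unfolding RI[OF p st'] Gv using True by simp
      next
        case False
        then have ppO: "p \<le> pO" by simp
        note al = alg_low[OF c1pos c0pos lam1 lam2 p _ pO' ppO]
        have "c0 * integral\<^sup>L M (Et r \<tau>) - c1 * integral\<^sup>L M (Qt r p \<mu> \<sigma> \<tau>)
           \<le> (lam2 * (c0 - c1 * p) + c1 * p) / (lam2 - lam1) + (- c1 * p - lam1 * (c0 - c1 * p)) / (lam2 - lam1)"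
        proof (rule upper_bound[OF rm r p st' q1 q2])
          show "(lam2 * (c0 - c1 * p) + c1 * p) / (lam2 - lam1) \<ge> 0" using al(1)[OF p] .
          show "(- c1 * p - lam1 * (c0 - c1 * p)) / (lam2 - lam1) \<ge> 0" using al(2)[OF p] .
          fix X :: real assume X: "X > 0"
          show "c0 - c1 * X \<le> (lam2 * (c0 - c1 * p) + c1 * p) / (lam2 - lam1) * (X / p) powr lam1
              + (- c1 * p - lam1 * (c0 - c1 * p)) / (lam2 - lam1) * (X / p) powr lam2"
            using al(4)[OF X] .
        qed
        also have "\<dots> = c0 - c1 * p" using al(3)[OF p] .
        finally show ?thesis unfolding RI[OF p st'] Gv using False by simp
      qed
      have ub': "stop_reward M r C l1 l0 (gbm p \<mu> \<sigma> B) \<tau> \<le> stop_reward M r C l1 l0 (gbm p \<mu> \<sigma> B) ?\<tau>"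
        if "is_stopping_time F \<tau>" for \<tau> using ub[OF that] rew by simp
      show ?thesis using st ub' rew value_eq[OF st ub'] by auto
    qed
    show "let p_O = exp (- \<mu> * \<delta>) * (lam1 / (lam1 - 1)) * (r - \<mu>) * (C / r - K_O);
            A = exp ((\<mu> - r) * \<delta>) * p_O powr (1 - lam1) / (lam1 * (\<mu> - r)) in
        \<forall>p>0.
          let P = gbm p \<mu> \<sigma> B;
              \<tau>s = (\<lambda>\<omega>. Inf {ereal t | t. t > 0 \<and> P t \<omega> \<le> p_O});
              g = (if p > p_O then A * p powr lam1 + p / (r - \<mu>) - C / r
                   else p / (\<mu> - r) * (exp ((\<mu> - r) * \<delta>) - 1) + C / r * (exp (- r * \<delta>) - 1)
                        - exp (- r * \<delta>) * K_O) in
          is_stopping_time F \<tau>s \<and>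
          (\<forall>\<tau>. is_stopping_time F \<tau> \<longrightarrow> stop_reward M r C l1 l0 P \<tau> \<le> stop_reward M r C l1 l0 P \<tau>s) \<and>
          stop_reward M r C l1 l0 P \<tau>s = g \<and>
          value_G M F r C l1 l0 P = g"
      unfolding Let_def pO_def[symmetric] AA_def[symmetric] hit_eq
      using main by blast
  qed
qed


end
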